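(* Let $M$ be an entire graph in $\mathbf H^{p,q}_+$ and let $\partial^+_\infty M$ denote its asymptotic boundary. The following are equivalent: (1) $\partial^+_\infty M$ is not admissible; (2) $M$ contains a complete lightlike geodesic; (3) $M$ is foliated by complete lightlike geodesics; (4) in every Fermi chart, $M$ is the graph of a $1$-Lipschitz map $\varphi:\mathbf S^p_+\to\mathbf S^q$ of the form $$\varphi(\sin(t)u_0+\cos(t)v)=\sin(t)w_0+\cos(t)\,\overline\varphi(v),\qquad t\in(-\pi/2,\pi/2),$$ for some $u_0\in\mathbf S^{p-1}$, $w_0\in\mathbf S^q$ and some $1$-Lipschitz map $\overline\varphi$ from the hemisphere $u_0^\perp\cap\mathbf S^p_+$ to the $(q-1)$-sphere $w_0^\perp\cap\mathbf S^q$.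
   Context: $E$ is a real vector space of dimension $p+q+1$ with a non-degenerate symmetric bilinear form $\mathbf b$ of signature $(p,q+1)$; $\mathbf H^{p,q}_+$ is the set of oriented lines with $\mathbf b(x,x)<0$, identified with the quadric $\{\mathbf b(x,x)=-1\}$ with induced metric of signature $(p,q)$; $\partial_\infty\mathbf H^{p,q}_+$ is the space of oriented isotropic lines. Fermi chart: for a $\mathbf b$-orthogonal decomposition $E=\ell\oplus U\oplus V$ ($\ell$ an oriented negative line, $U$ positive definite, $\dim U=p$), let $W=\ell\oplus V$, $\mathbf S^q=\{w\in W:\mathbf b(w,w)=-1\}$, $\mathbf B^p$ the unit ball of $U$; let $\mathbf S^p$ be the unit sphere of $\ell\oplus U$ for the positive form that reverses the sign of $\mathbf b$ on $\ell$, $\mathbf S^p_+$ its open upper hemisphere with equator $\mathbf S^{p-1}$ (the unit sphere of $U$), closure $\overline{\mathbf S}{}^p_+$, and $\sigma$ stereographic projection onto $\mathbf B^p$; all spheres carry round metrics, and $u_0^\perp$, $w_0^\perp$ refer to the corresponding Euclidean inner products. The chart $\Psi(u,w)=\big[\tfrac{2\sigma(u)+(1+\|\sigma(u)\|^2)w}{1-\|\sigma(u)\|^2}\big]$ identifies $\mathbf S^p_+\times\mathbf S^q$ with $\mathbf H^{p,q}_+$, and $(u,w)\mapsto[u+w]$ identifies $\mathbf S^{p-1}\times\mathbf S^q$ with $\partial_\infty\mathbf H^{p,q}_+$. An entire graph is a subset equal to $\{\Psi(u,\varphi(u))\}$ for a $1$-Lipschitz $\varphi:\mathbf S^p_+\to\mathbf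 S^q$ in some (equivalently every) Fermi chart; its asymptotic boundary is $\{[u+\overline\varphi(u)]:u\in\mathbf S^{p-1}\}$ where $\overline\varphi$ is the continuous extension of $\varphi$ to $\overline{\mathbf S}{}^p_+$; this is a non-negative $(p-1)$-sphere. A non-negative sphere is admissible if it contains no two points that are the same line with opposite orientations. *)

theory Defs
  imports "HOL-Analysis.Analysis"
begin

text \<open>E is modelled as a Euclidean space of dimension p+q+1 (only its linear
structure and topology are used), equipped with an abstract symmetric bilinear form b.\<close>

definition symmetric_bilinear :: "('a::real_vector \<Rightarrow> 'a \<Rightarrow> real) \<Rightarrow> bool" where
  "symmetric_bilinear b \<longleftrightarrow> bilinear b \<and> (\<forall>x y. b x y = b y x)"

definition nondegenerate :: "('a::real_vector \<Rightarrow> 'a \<Rightarrow> real) \<Rightarrow> bool" where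
  "nondegenerate b \<longleftrightarrow> (\<forall>x. (\<forall>y. b x y = 0) \<longrightarrow> x = 0)"

definition pos_def_on :: "('a::real_vector \<Rightarrow> 'a \<Rightarrow> real) \<Rightarrow> 'a set \<Rightarrow> bool" where
  "pos_def_on b S \<longleftrightarrow> (\<forall>x\<in>S. x \<noteq> 0 \<longrightarrow> b x x > 0)"

definition neg_def_on :: "('a::real_vector \<Rightarrow> 'a \<Rightarrow> real) \<Rightarrow> 'a set \<Rightarrow> bool" where
  "neg_def_on b S \<longleftrightarrow> (\<forall>x\<in>S. x \<noteq> 0 \<longrightarrow> b x x < 0)"

definition has_signature :: "('a::euclidean_space \<Rightarrow> 'a \<Rightarrow> real) \<Rightarrow> nat \<Rightarrow> nat \<Rightarrow> bool" where
  "has_signature b r s \<longleftrightarrow> nondegenerate b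
     \<and> (\<exists>U. subspace U \<and> dim U = r \<and> pos_def_on b U)
     \<and> (\<forall>U. subspace U \<and> pos_def_on b U \<longrightarrow> dim U \<le> r)
     \<and> (\<exists>V. subspace V \<and> dim V = s \<and> neg_def_on b V)
     \<and> (\<forall>V. subspace V \<and> neg_def_on b V \<longrightarrow> dim V \<le> s)"

text \<open>H^{p,q}_+ in its quadric model {b(x,x) = -1}.\<close>
definition Hpq :: "('a::real_vector \<Rightarrow> 'a \<Rightarrow> real) \<Rightarrow> 'a set" where
  "Hpq b = {x. b x x = -1}"

text \<open>Points of the boundary: oriented isotropic lines, represented as open rays.\<close>
definition ray :: "'a::real_vector \<Rightarrow> 'a set" where
  "ray x = {c *\<^sub>R x | c. c > 0}"

definition admissible :: "'a::real_vector set set \<Rightarrow> bool" where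
  "admissible \<Lambda> \<longleftrightarrow> \<not> (\<exists>x. x \<noteq> 0 \<and> ray x \<in> \<Lambda> \<and> ray (- x) \<in> \<Lambda>)"

text \<open>A Fermi chart is given by e0 (the unit vector, b(e0,e0) = -1, spanning and orienting
the negative line l), and subspaces U, V with E = l + U + V b-orthogonal, U positive definite
of dimension p.\<close>
definition fermi_chart :: "('a::euclidean_space \<Rightarrow> 'a \<Rightarrow> real) \<Rightarrow> nat \<Rightarrow> 'a \<Rightarrow> 'a set \<Rightarrow> 'a set \<Rightarrow> bool" where
  "fermi_chart b p e0 U V \<longleftrightarrow> b e0 e0 = -1 \<and> subspace U \<and> subspace V \<and> dim U = p
     \<and> pos_def_on b U
     \<and> (\<forall>u\<in>U. b e0 u = 0) \<and> (\<forall>v\<in>V. b e0 v = 0) \<and> (\<forall>u\<in>U. \<forall>v\<in>V. b u v = 0)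
     \<and> (\<forall>x. \<exists>a u v. u \<in> U \<and> v \<in> V \<and> x = a *\<^sub>R e0 + u + v)"

text \<open>Euclidean inner product on l + U (sign of b reversed on l), and on W = l + V (= -b).\<close>
definition ipS :: "('a::real_vector \<Rightarrow> 'a \<Rightarrow> real) \<Rightarrow> 'a \<Rightarrow> 'a \<Rightarrow> 'a \<Rightarrow> real" where
  "ipS b e0 x y = b x y + 2 * b x e0 * b y e0"

definition ipW :: "('a::real_vector \<Rightarrow> 'a \<Rightarrow> real) \<Rightarrow> 'a \<Rightarrow> 'a \<Rightarrow> real" where
  "ipW b x y = - b x y"

definition Sp :: "('a::real_vector \<Rightarrow> 'a \<Rightarrow> real) \<Rightarrow> 'a \<Rightarrow> 'a set \<Rightarrow> 'a set" where
  "Sp b e0 U = {x. (\<exists>a u. u \<in> U \<and> x = a *\<^sub>R e0 + u) \<and> ipS b e0 x x = 1}"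

text \<open>Open upper hemisphere: positive l-component, i.e. -b(x,e0) > 0.\<close>
definition Sp_plus :: "('a::real_vector \<Rightarrow> 'a \<Rightarrow> real) \<Rightarrow> 'a \<Rightarrow> 'a set \<Rightarrow> 'a set" where
  "Sp_plus b e0 U = {x \<in> Sp b e0 U. b x e0 < 0}"

definition equator :: "('a::real_vector \<Rightarrow> 'a \<Rightarrow> real) \<Rightarrow> 'a set \<Rightarrow> 'a set" where
  "equator b U = {u \<in> U. b u u = 1}"

definition Sq :: "('a::real_vector \<Rightarrow> 'a \<Rightarrow> real) \<Rightarrow> 'a \<Rightarrow> 'a set \<Rightarrow> 'a set" where
  "Sq b e0 V = {w. (\<exists>a v. v \<in> V \<and> w = a *\<^sub>R e0 + v) \<and> b w w = -1}"

text \<open>Stereographic projection S^p_+ -> B^p (from the pole -e0):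
  a e0 + x  |->  x / (1 + a).\<close>
definition stereo :: "('a::real_vector \<Rightarrow> 'a \<Rightarrow> real) \<Rightarrow> 'a \<Rightarrow> 'a \<Rightarrow> 'a" where
  "stereo b e0 u = (1 / (1 - b u e0)) *\<^sub>R (u + b u e0 *\<^sub>R e0)"

definition Psi :: "('a::real_vector \<Rightarrow> 'a \<Rightarrow> real) \<Rightarrow> 'a \<Rightarrow> 'a \<Rightarrow> 'a \<Rightarrow> 'a" where
  "Psi b e0 u w = (let s = stereo b e0 u; n = b s s
                   in (1 / (1 - n)) *\<^sub>R (2 *\<^sub>R s + (1 + n) *\<^sub>R w))"

text \<open>1-Lipschitz for the round metrics (angular distance) of the unit spheres.\<close>
definition lip1 :: "('a \<Rightarrow> 'a \<Rightarrow> real) \<Rightarrow> ('b \<Rightarrow> 'b \<Rightarrow> real) \<Rightarrow> 'a set \<Rightarrow> ('a \<Rightarrow> 'b) \<Rightarrow> bool" where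
  "lip1 ip1 ip2 S f \<longleftrightarrow> (\<forall>x\<in>S. \<forall>y\<in>S. arccos (ip2 (f x) (f y)) \<le> arccos (ip1 x y))"

definition graph_map :: "('a::real_vector \<Rightarrow> 'a \<Rightarrow> real) \<Rightarrow> 'a \<Rightarrow> 'a set \<Rightarrow> 'a set \<Rightarrow> ('a \<Rightarrow> 'a) \<Rightarrow> bool" where
  "graph_map b e0 U V \<phi> \<longleftrightarrow> \<phi> ` Sp_plus b e0 U \<subseteq> Sq b e0 V
      \<and> lip1 (ipS b e0) (ipW b) (Sp_plus b e0 U) \<phi>"

definition graph_of :: "('a::real_vector \<Rightarrow> 'a \<Rightarrow> real) \<Rightarrow> 'a \<Rightarrow> 'a set \<Rightarrow> ('a \<Rightarrow> 'a) \<Rightarrow> 'a set" where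
  "graph_of b e0 U \<phi> = (\<lambda>u. Psi b e0 u (\<phi> u)) ` Sp_plus b e0 U"

definition entire_graph_in :: "('a::euclidean_space \<Rightarrow> 'a \<Rightarrow> real) \<Rightarrow> nat \<Rightarrow> 'a \<Rightarrow> 'a set \<Rightarrow> 'a set
      \<Rightarrow> ('a \<Rightarrow> 'a) \<Rightarrow> 'a set \<Rightarrow> bool" where
  "entire_graph_in b p e0 U V \<phi> M \<longleftrightarrow> fermi_chart b p e0 U V \<and> graph_map b e0 U V \<phi>
      \<and> M = graph_of b e0 U \<phi>"

definition ext_map :: "('a::euclidean_space \<Rightarrow> 'a \<Rightarrow> real) \<Rightarrow> 'a \<Rightarrow> 'a set \<Rightarrow> ('a \<Rightarrow> 'a) \<Rightarrow> 'a \<Rightarrow> 'a" where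
  "ext_map b e0 U \<phi> u = (if u \<in> Sp_plus b e0 U then \<phi> u else Lim (at u within Sp_plus b e0 U) \<phi>)"

definition asym_boundary :: "('a::euclidean_space \<Rightarrow> 'a \<Rightarrow> real) \<Rightarrow> 'a \<Rightarrow> 'a set \<Rightarrow> ('a \<Rightarrow> 'a) \<Rightarrow> 'a set set" where
  "asym_boundary b e0 U \<phi> = {ray (u + ext_map b e0 U \<phi> u) | u. u \<in> equator b U}"

text \<open>A complete lightlike geodesic of the quadric: a curve defined on all of R, lying in the
quadric, whose ambient acceleration is normal to the quadric (normal space at x = span {x}),
with nonzero isotropic velocity.\<close>
definition complete_lightlike_geodesic :: "('a::euclidean_space \<Rightarrow> 'a \<Rightarrow> real) \<Rightarrow> (real \<Rightarrow> 'a) \<Rightarrow> bool" where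
  "complete_lightlike_geodesic b \<gamma> \<longleftrightarrow> (\<exists>\<gamma>' \<gamma>''. \<forall>t.
      (\<gamma> has_vector_derivative \<gamma>' t) (at t) \<and> (\<gamma>' has_vector_derivative \<gamma>'' t) (at t)
      \<and> \<gamma> t \<in> Hpq b \<and> \<gamma>'' t \<in> span {\<gamma> t} \<and> b (\<gamma>' t) (\<gamma>' t) = 0 \<and> \<gamma>' t \<noteq> 0)"

definition contains_lightlike_geodesic :: "('a::euclidean_space \<Rightarrow> 'a \<Rightarrow> real) \<Rightarrow> 'a set \<Rightarrow> bool" where
  "contains_lightlike_geodesic b M \<longleftrightarrow> (\<exists>\<gamma>. complete_lightlike_geodesic b \<gamma> \<and> range \<gamma> \<subseteq> M)"

definition foliated_by_lightlike_geodesics :: "('a::euclidean_space \<Rightarrow> 'a \<Rightarrow> real) \<Rightarrow> 'a set \<Rightarrow> bool" where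
  "foliated_by_lightlike_geodesics b M \<longleftrightarrow> (\<exists>F. (\<forall>L\<in>F. \<exists>\<gamma>. complete_lightlike_geodesic b \<gamma> \<and> L = range \<gamma>)
      \<and> (\<forall>L\<in>F. \<forall>L'\<in>F. L \<noteq> L' \<longrightarrow> L \<inter> L' = {}) \<and> \<Union>F = M)"

definition split_form_in :: "('a::euclidean_space \<Rightarrow> 'a \<Rightarrow> real) \<Rightarrow> 'a \<Rightarrow> 'a set \<Rightarrow> 'a set \<Rightarrow> 'a set \<Rightarrow> bool" where
  "split_form_in b e0 U V M \<longleftrightarrow> (\<exists>\<phi>. graph_map b e0 U V \<phi> \<and> M = graph_of b e0 U \<phi>
     \<and> (\<exists>u0 w0 \<psi>. u0 \<in> equator b U \<and> w0 \<in> Sq b e0 V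
         \<and> \<psi> ` {v \<in> Sp_plus b e0 U. ipS b e0 u0 v = 0} \<subseteq> {w \<in> Sq b e0 V. ipW b w0 w = 0}
         \<and> lip1 (ipS b e0) (ipW b) {v \<in> Sp_plus b e0 U. ipS b e0 u0 v = 0} \<psi>
         \<and> (\<forall>t v. - (pi/2) < t \<and> t < pi/2 \<and> v \<in> Sp_plus b e0 U \<and> ipS b e0 u0 v = 0 \<longrightarrow>
               \<phi> (sin t *\<^sub>R u0 + cos t *\<^sub>R v) = sin t *\<^sub>R w0 + cos t *\<^sub>R \<psi> v)))"

end

theory Submission
  imports Defs
begin


locale bform =
  fixes b :: "'a::euclidean_space \<Rightarrow> 'a \<Rightarrow> real"
  assumes sb: "symmetric_bilinear b"
begin

lemma bil: "bilinear b" using sb by (simp add: symmetric_bilinear_def)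
lemma bsym: "b x y = b y x" using sb by (simp add: symmetric_bilinear_def)
lemma linR: "linear (\<lambda>y. b x y)" using bil by (simp add: bilinear_def)
lemma linL: "linear (\<lambda>x. b x y)" using bil by (simp add: bilinear_def)

lemma b_addL: "b (x + y) z = b x z + b y z" using linear_add[OF linL] by blast
lemma b_addR: "b z (x + y) = b z x + b z y" using linear_add[OF linR] by blast
lemma b_diffL: "b (x - y) z = b x z - b y z" using linear_diff[OF linL] by blast
lemma b_diffR: "b z (x - y) = b z x - b z y" using linear_diff[OF linR] by blast
lemma b_scaleL: "b (c *\<^sub>R x) z = c * b x z" using linear_scale[OF linL] by simp
lemma b_scaleR: "b z (c *\<^sub>R x) = c * b z x" using linear_scale[OF linR] by simp
lemma b_minusL: "b (- x) z = - b x z" using linear_neg[OF linL] by blast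
lemma b_minusR: "b z (- x) = - b z x" using linear_neg[OF linR] by blast
lemma b_zeroL: "b 0 z = 0" using linear_0[OF linL] by blast
lemma b_zeroR: "b z 0 = 0" using linear_0[OF linR] by blast

lemmas bsimps = b_addL b_addR b_diffL b_diffR b_scaleL b_scaleR b_minusL b_minusR b_zeroL b_zeroR

lemma bb: "bounded_bilinear b" using bil bilinear_conv_bounded_bilinear by blast

lemma b_tendsto: "(f \<longlongrightarrow> x) F \<Longrightarrow> (g \<longlongrightarrow> y) F \<Longrightarrow> ((\<lambda>t. b (f t) (g t)) \<longlongrightarrow> b x y) F"
  using bounded_bilinear.tendsto[OF bb] by blast

lemma b_cont: "continuous_on S f \<Longrightarrow> continuous_on S g \<Longrightarrow> continuous_on S (\<lambda>t. b (f t) (g t))"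
  using bounded_bilinear.continuous_on[OF bb] by blast

lemma b_bound: "\<exists>K>0. \<forall>x y. \<bar>b x y\<bar> \<le> K * norm x * norm y"
proof -
  obtain K where "K>0" "\<And>x y. norm (b x y) \<le> norm x * norm y * K"
    using bounded_bilinear.pos_bounded[OF bb] by blast
  then show ?thesis by (metis mult.commute mult.left_commute real_norm_def)
qed

lemma b_vd: "(f has_vector_derivative f') (at t) \<Longrightarrow> (g has_vector_derivative g') (at t) \<Longrightarrow>
   ((\<lambda>t. b (f t) (g t)) has_real_derivative (b (f t) g' + b f' (g t))) (at t)"
  using bounded_bilinear.has_vector_derivative[OF bb, of f f' t UNIV g g']
  by (simp add: has_real_derivative_iff_has_vector_derivative)

end




locale chart = bform b for b :: "'a::euclidean_space \<Rightarrow> 'a \<Rightarrow> real" +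
  fixes p q :: nat and e0 :: 'a and U V :: "'a set"
  assumes dimA: "DIM('a) = p + q + 1"
    and sig: "has_signature b p (q + 1)"
    and fc: "fermi_chart b p e0 U V"
begin

lemma e0e0: "b e0 e0 = -1" using fc by (simp add: fermi_chart_def)
lemma subU: "subspace U" using fc by (simp add: fermi_chart_def)
lemma subV: "subspace V" using fc by (simp add: fermi_chart_def)
lemma dimU: "dim U = p" using fc by (simp add: fermi_chart_def)
lemma posU: "u \<in> U \<Longrightarrow> u \<noteq> 0 \<Longrightarrow> b u u > 0" using fc by (simp add: fermi_chart_def pos_def_on_def)
lemma oeU: "u \<in> U \<Longrightarrow> b e0 u = 0" using fc by (simp add: fermi_chart_def)
lemma oeV: "v \<in> V \<Longrightarrow> b e0 v = 0" using fc by (simp add: fermi_chart_def)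
lemma oUV: "u \<in> U \<Longrightarrow> v \<in> V \<Longrightarrow> b u v = 0" using fc by (simp add: fermi_chart_def)
lemma decomp: "\<exists>a u v. u \<in> U \<and> v \<in> V \<and> x = a *\<^sub>R e0 + u + v" using fc by (simp add: fermi_chart_def)
lemma nondeg: "(\<And>y. b x y = 0) \<Longrightarrow> x = 0" using sig by (auto simp: has_signature_def nondegenerate_def)
lemma posmax: "subspace S \<Longrightarrow> pos_def_on b S \<Longrightarrow> dim S \<le> p" using sig by (simp add: has_signature_def)

lemma ueU: "u \<in> U \<Longrightarrow> b u e0 = 0" using oeU bsym by metis
lemma veV: "v \<in> V \<Longrightarrow> b v e0 = 0" using oeV bsym by metis
lemma oVU: "u \<in> U \<Longrightarrow> v \<in> V \<Longrightarrow> b v u = 0" using oUV bsym by metis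

lemma U0: "0 \<in> U" using subU subspace_0 by blast
lemma V0: "0 \<in> V" using subV subspace_0 by blast
lemma Uadd: "x \<in> U \<Longrightarrow> y \<in> U \<Longrightarrow> x + y \<in> U" using subU subspace_add by blast
lemma Vadd: "x \<in> V \<Longrightarrow> y \<in> V \<Longrightarrow> x + y \<in> V" using subV subspace_add by blast
lemma Uscale: "x \<in> U \<Longrightarrow> c *\<^sub>R x \<in> U" using subU subspace_scale by blast
lemma Vscale: "x \<in> V \<Longrightarrow> c *\<^sub>R x \<in> V" using subV subspace_scale by blast
lemma Udiff: "x \<in> U \<Longrightarrow> y \<in> U \<Longrightarrow> x - y \<in> U" using subU subspace_diff by blast
lemma Vdiff: "x \<in> V \<Longrightarrow> y \<in> V \<Longrightarrow> x - y \<in> V" using subV subspace_diff by blast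
lemma Uneg: "x \<in> U \<Longrightarrow> - x \<in> U" using subU subspace_neg by blast

lemma e0_notU: "e0 \<notin> U" using oeU e0e0 by force

lemma V_semi: assumes "v \<in> V" shows "b v v \<le> 0"
proof (rule ccontr)
  assume "\<not> b v v \<le> 0" hence vp: "b v v > 0" by simp
  have vU: "v \<notin> U" using oUV[of v v] assms vp by auto
  let ?S = "span (insert v U)"
  have "subspace ?S" by simp
  have sU: "span U = U" using span_eq_iff subU by blast
  have dS: "dim ?S = p + 1"
    using dim_insert[of v U] vU sU dimU by (simp add: dim_span)
  have "pos_def_on b ?S"
    unfolding pos_def_on_def
  proof (intro ballI impI)
    fix y assume y: "y \<in> ?S" "y \<noteq> 0"
    then obtain t where t: "y - t *\<^sub>R v \<in> span U" using span_breakdown_eq by blast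
    hence tU: "y - t *\<^sub>R v \<in> U" using span_eq_iff subU by blast
    define u where "u = y - t *\<^sub>R v"
    have yu: "y = u + t *\<^sub>R v" by (simp add: u_def)
    have "b y y = b u u + t * t * b v v"
      unfolding yu using oUV[OF tU[folded u_def] assms] oVU[OF tU[folded u_def] assms]
      by (simp add: bsimps)
    note byy = this
    have uU: "u \<in> U" using tU u_def by simp
    have tt: "t * t * b v v \<ge> 0" using vp by simp
    have "u \<noteq> 0 \<or> t \<noteq> 0" using y yu by auto
    thus "b y y > 0"
    proof
      assume "u \<noteq> 0" hence "b u u > 0" using posU uU by blast
      thus ?thesis using byy tt by linarith
    next
      assume "t \<noteq> 0" hence "t * t > 0" using not_real_square_gt_zero by blast
      hence "t * t * b v v > 0" using vp by (rule mult_pos_pos)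
      moreover have "b u u \<ge> 0" using posU[OF uU] by (cases "u = 0") (auto simp: bsimps)
      ultimately show ?thesis using byy by linarith
    qed
  qed
  with posmax[OF \<open>subspace ?S\<close>] dS show False by simp
qed

definition W where "W = {a *\<^sub>R e0 + v | a v. v \<in> V}"

lemma W_iff: "w \<in> W \<longleftrightarrow> (\<exists>a v. v \<in> V \<and> w = a *\<^sub>R e0 + v)" by (auto simp: W_def)

lemma e0W: "e0 \<in> W" unfolding W_iff using V0 by (intro exI[of _ 1] exI[of _ 0]) simp
lemma VW: "v \<in> V \<Longrightarrow> v \<in> W" unfolding W_iff by (intro exI[of _ 0] exI[of _ v]) simp

lemma subW: "subspace W"
  unfolding subspace_def
proof (intro conjI ballI allI)
  show "0 \<in> W" using V0 by (auto simp: W_def intro!: exI[of _ 0])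
  fix x y assume "x \<in> W" "y \<in> W"
  then obtain a v a' v' where "v \<in> V" "v' \<in> V" "x = a *\<^sub>R e0 + v" "y = a' *\<^sub>R e0 + v'" by (auto simp: W_def)
  thus "x + y \<in> W" using Vadd by (auto simp: W_def algebra_simps intro!: exI[of _ "a+a'"] exI[of _ "v+v'"])
next
  fix c x assume "x \<in> W"
  then obtain a v where "v \<in> V" "x = a *\<^sub>R e0 + v" by (auto simp: W_def)
  thus "c *\<^sub>R x \<in> W" using Vscale by (auto simp: W_def algebra_simps intro!: exI[of _ "c*a"] exI[of _ "c *\<^sub>R v"])
qed

lemma Wadd: "x \<in> W \<Longrightarrow> y \<in> W \<Longrightarrow> x + y \<in> W" using subW subspace_add by blast
lemma Wscale: "x \<in> W \<Longrightarrow> c *\<^sub>R x \<in> W" using subW subspace_scale by blast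
lemma Wdiff: "x \<in> W \<Longrightarrow> y \<in> W \<Longrightarrow> x - y \<in> W" using subW subspace_diff by blast
lemma W0: "0 \<in> W" using subW subspace_0 by blast
lemma Wneg: "x \<in> W \<Longrightarrow> - x \<in> W" using subW subspace_neg by blast

lemma oUW: "u \<in> U \<Longrightarrow> w \<in> W \<Longrightarrow> b u w = 0"
  by (auto simp: W_def bsimps oUV ueU)
lemma oWU: "u \<in> U \<Longrightarrow> w \<in> W \<Longrightarrow> b w u = 0" using oUW bsym by metis

lemma W_semi: "w \<in> W \<Longrightarrow> b w w \<le> 0"
proof -
  assume "w \<in> W"
  then obtain a v where v: "v \<in> V" "w = a *\<^sub>R e0 + v" by (auto simp: W_def)
  have "b w w = - (a*a) + b v v" using v by (simp add: bsimps e0e0 oeV veV)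
  thus ?thesis using V_semi[OF v(1)] by (smt (verit) zero_le_square)
qed

lemma semi_radical:
  assumes semi: "\<And>t. b (x + t *\<^sub>R y) (x + t *\<^sub>R y) \<le> 0" and x0: "b x x = 0"
  shows "b x y = 0"
proof (rule ccontr)
  assume ne: "b x y \<noteq> 0"
  let ?B = "b x y" and ?C = "b y y"
  have e: "b (x + t *\<^sub>R y) (x + t *\<^sub>R y) = 2 * t * ?B + t * t * ?C" for t
    using x0 by (simp add: bsimps bsym[of y x] algebra_simps)
  define s where "s = 1 / (1 + \<bar>?C\<bar>)"
  have s: "s > 0" "s * \<bar>?C\<bar> < 1" by (auto simp: s_def field_simps)
  have "2 * (s*?B) * ?B + (s*?B) * (s*?B) * ?C \<le> 0" using semi[of "s * ?B"] e by simp
  hence "?B * ?B * (s * (2 + s * ?C)) \<le> 0" by (simp add: algebra_simps)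
  moreover have "s * (2 + s * ?C) > 0"
  proof -
    have "- \<bar>?C\<bar> \<le> ?C" by simp
    hence "s * (- \<bar>?C\<bar>) \<le> s * ?C" using s(1) by (intro mult_left_mono) auto
    hence "2 + s * ?C > 0" using s(2) by simp
    thus ?thesis using s(1) by (rule mult_pos_pos[rotated])
  qed
  moreover have "?B * ?B > 0" using ne not_real_square_gt_zero by blast
  ultimately show False using mult_pos_pos[of "?B * ?B" "s * (2 + s * ?C)"] by linarith
qed

lemma W_def_neg: assumes "w \<in> W" "b w w = 0" shows "w = 0"
proof -
  obtain a v where v: "v \<in> V" "w = a *\<^sub>R e0 + v" using assms by (auto simp: W_def)
  have "b w w = - (a*a) + b v v" using v by (simp add: bsimps e0e0 oeV veV)
  hence a0: "a = 0" and vv: "b v v = 0" using V_semi[OF v(1)] assms(2)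
    by (smt (verit) zero_le_square mult_eq_0_iff)+
  have rad: "b v v' = 0" if "v' \<in> V" for v'
    by (rule semi_radical[OF _ vv]) (use Vadd Vscale V_semi that v in auto)
  have "b v x = 0" for x
  proof -
    obtain a' u v' where "u \<in> U" "v' \<in> V" "x = a' *\<^sub>R e0 + u + v'" using decomp by blast
    thus ?thesis using rad oVU v(1) veV by (simp add: bsimps)
  qed
  hence "v = 0" using nondeg by blast
  thus ?thesis using a0 v by simp
qed

lemma W_neg: "w \<in> W \<Longrightarrow> w \<noteq> 0 \<Longrightarrow> b w w < 0" using W_semi W_def_neg by force

lemma UW_int: "x \<in> U \<Longrightarrow> x \<in> W \<Longrightarrow> x = 0"
  using oUW[of x x] posU[of x] by force

lemma decompUW: "\<exists>u w. u \<in> U \<and> w \<in> W \<and> x = u + w"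
proof -
  obtain a u v where "u \<in> U" "v \<in> V" "x = a *\<^sub>R e0 + u + v" using decomp by blast
  moreover have "a *\<^sub>R e0 + v \<in> W" using \<open>v \<in> V\<close> W_iff by blast
  ultimately show ?thesis by (intro exI[of _ u] exI[of _ "a *\<^sub>R e0 + v"]) (simp add: algebra_simps)
qed

lemma uniqUW: "u \<in> U \<Longrightarrow> w \<in> W \<Longrightarrow> u' \<in> U \<Longrightarrow> w' \<in> W \<Longrightarrow> u + w = u' + w' \<Longrightarrow> u = u' \<and> w = w'"
proof -
  assume a: "u \<in> U" "w \<in> W" "u' \<in> U" "w' \<in> W" "u + w = u' + w'"
  hence "u - u' = w' - w" by (simp add: algebra_simps)
  moreover have "u - u' \<in> U" "w' - w \<in> W" using a Udiff Wdiff by auto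
  ultimately have "u - u' = 0" using UW_int by metis
  thus ?thesis using a by simp
qed

definition pU where "pU x = (THE u. u \<in> U \<and> x - u \<in> W)"
definition pW where "pW x = x - pU x"

lemma pU_char: "u \<in> U \<Longrightarrow> x - u \<in> W \<Longrightarrow> pU x = u"
  unfolding pU_def
proof (rule the_equality)
  fix u' assume "u \<in> U" "x - u \<in> W" "u' \<in> U \<and> x - u' \<in> W"
  thus "u' = u" using uniqUW[of u' "x - u'" u "x - u"] by auto
qed auto

lemma pU_W: "pU x \<in> U \<and> x - pU x \<in> W"
proof -
  obtain u w where "u \<in> U" "w \<in> W" "x = u + w" using decompUW by blast
  thus ?thesis using pU_char[of u x] by auto
qed

lemma pU_in: "pU x \<in> U" and pW_in: "pW x \<in> W" using pU_W by (auto simp: pW_def)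
lemma pUW: "pU x + pW x = x" by (simp add: pW_def)

lemma pU_lin: "linear pU"
proof (rule linearI)
  fix x y 
  have e: "x + y - (pU x + pU y) = (x - pU x) + (y - pU y)" by (simp add: algebra_simps)
  show "pU (x + y) = pU x + pU y"
    by (rule pU_char) (use pU_W Uadd Wadd e in metis)+
next
  fix c x 
  have e: "c *\<^sub>R x - c *\<^sub>R pU x = c *\<^sub>R (x - pU x)" by (simp add: algebra_simps)
  show "pU (c *\<^sub>R x) = c *\<^sub>R pU x"
    by (rule pU_char) (use pU_W Uscale Wscale e in metis)+
qed

lemma pW_lin: "linear pW"
  by (rule linearI) (simp_all add: pW_def linear_add[OF pU_lin] linear_scale[OF pU_lin] algebra_simps)

lemma pU_U: "x \<in> U \<Longrightarrow> pU x = x" using pU_char W0 by auto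
lemma pU_Wz: "x \<in> W \<Longrightarrow> pU x = 0" using pU_char U0 by auto
lemma pW_W: "x \<in> W \<Longrightarrow> pW x = x" using pU_Wz by (simp add: pW_def)
lemma pW_U: "x \<in> U \<Longrightarrow> pW x = 0" using pU_U by (simp add: pW_def)

lemma pU_cont: "continuous_on S pU" using pU_lin linear_continuous_on linear_conv_bounded_linear by blast
lemma pW_cont: "continuous_on S pW" using pW_lin linear_continuous_on linear_conv_bounded_linear by blast

lemma b_split: "b x y = b (pU x) (pU y) + b (pW x) (pW y)"
proof -
  have "b x y = b (pU x + pW x) (pU y + pW y)" by (simp add: pUW)
  also have "\<dots> = b (pU x) (pU y) + b (pW x) (pW y)"
    using oUW[OF pU_in pW_in] oWU[OF pU_in pW_in] by (simp add: bsimps)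
  finally show ?thesis .
qed

definition Bp where "Bp x y = b (pU x) (pU y) - b (pW x) (pW y)"

lemma Bp_nonneg: "Bp x x \<ge> 0"
  using W_semi[OF pW_in, of x] posU[OF pU_in, of x] by (cases "pU x = 0") (auto simp: Bp_def bsimps)

lemma Bp_pos: "x \<noteq> 0 \<Longrightarrow> Bp x x > 0"
proof -
  assume "x \<noteq> 0"
  hence "pU x \<noteq> 0 \<or> pW x \<noteq> 0" using pUW[of x] by auto
  thus ?thesis using W_neg[OF pW_in, of x] posU[OF pU_in, of x] W_semi[OF pW_in, of x]
    by (cases "pU x = 0") (auto simp: Bp_def bsimps)
qed

lemma Bp_sym: "Bp x y = Bp y x" by (simp add: Bp_def bsym)

lemma Bp_addL: "Bp (x + y) z = Bp x z + Bp y z"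
  by (simp add: Bp_def linear_add[OF pU_lin] linear_add[OF pW_lin] bsimps)
lemma Bp_addR: "Bp z (x + y) = Bp z x + Bp z y"
  by (simp add: Bp_def linear_add[OF pU_lin] linear_add[OF pW_lin] bsimps)
lemma Bp_diffL: "Bp (x - y) z = Bp x z - Bp y z"
  by (simp add: Bp_def linear_diff[OF pU_lin] linear_diff[OF pW_lin] bsimps)
lemma Bp_diffR: "Bp z (x - y) = Bp z x - Bp z y"
  by (simp add: Bp_def linear_diff[OF pU_lin] linear_diff[OF pW_lin] bsimps)
lemma Bp_scaleL: "Bp (c *\<^sub>R x) z = c * Bp x z"
  by (simp add: Bp_def linear_scale[OF pU_lin] linear_scale[OF pW_lin] bsimps algebra_simps)
lemma Bp_scaleR: "Bp z (c *\<^sub>R x) = c * Bp z x"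
  by (simp add: Bp_def linear_scale[OF pU_lin] linear_scale[OF pW_lin] bsimps algebra_simps)
lemmas Bpsimps = Bp_addL Bp_addR Bp_diffL Bp_diffR Bp_scaleL Bp_scaleR

lemma Bp_W: "x \<in> W \<Longrightarrow> y \<in> W \<Longrightarrow> Bp x y = - b x y" by (simp add: Bp_def pU_Wz pW_W bsimps)
lemma Bp_U: "x \<in> U \<Longrightarrow> y \<in> U \<Longrightarrow> Bp x y = b x y" by (simp add: Bp_def pU_U pW_U bsimps)

lemma Bp_cont: "continuous_on S f \<Longrightarrow> continuous_on S g \<Longrightarrow> continuous_on S (\<lambda>t. Bp (f t) (g t))"
  unfolding Bp_def
  by (intro continuous_intros b_cont continuous_on_compose2[OF pU_cont] continuous_on_compose2[OF pW_cont]) auto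

lemma Bp_lower: "\<exists>c>0. \<forall>x. c * (norm x)\<^sup>2 \<le> Bp x x"
proof -
  have cpt: "compact (sphere (0::'a) 1)" by simp
  have ne: "sphere (0::'a) 1 \<noteq> {}" by (simp add: sphere_def) (metis norm_Basis SOME_Basis dist_0_norm)
  have ct: "continuous_on (sphere 0 1) (\<lambda>x. Bp x x)" by (intro Bp_cont continuous_on_id)
  obtain m where m: "m \<in> sphere (0::'a) 1" "\<And>y. y \<in> sphere 0 1 \<Longrightarrow> Bp m m \<le> Bp y y"
    using continuous_attains_inf[OF cpt ne ct] by blast
  have "m \<noteq> 0" using m(1) by auto
  hence mp: "Bp m m > 0" using Bp_pos by blast
  have "Bp m m * (norm x)\<^sup>2 \<le> Bp x x" for x
  proof (cases "x = 0")
    case True thus ?thesis by (simp add: Bp_def pW_def linear_0[OF pU_lin] bsimps)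
  next
    case False
    let ?y = "(1 / norm x) *\<^sub>R x"
    have "?y \<in> sphere 0 1" using False by simp
    hence "Bp m m \<le> Bp ?y ?y" using m(2) by blast
    also have "\<dots> = Bp x x / (norm x)\<^sup>2" by (simp add: Bpsimps power2_eq_square)
    finally show ?thesis using False by (simp add: field_simps)
  qed
  thus ?thesis using mp by blast
qed

lemma Bp_upper: "\<exists>K>0. \<forall>x y. \<bar>Bp x y\<bar> \<le> K * norm x * norm y"
proof -
  have "bilinear Bp"
    unfolding bilinear_def by (auto intro!: linearI simp: Bpsimps)
  hence "bounded_bilinear Bp" using bilinear_conv_bounded_bilinear by blast
  then obtain K where "K>0" "\<And>x y. norm (Bp x y) \<le> norm x * norm y * K"
    using bounded_bilinear.pos_bounded by blast
  then show ?thesis by (metis mult.commute mult.left_commute real_norm_def)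
qed

lemma Bp_CS: assumes "Bp x x = 1" "Bp y y = 1" shows "\<bar>Bp x y\<bar> \<le> 1"
proof -
  have "0 \<le> Bp (x - Bp x y *\<^sub>R y) (x - Bp x y *\<^sub>R y)" by (rule Bp_nonneg)
  also have "\<dots> = 1 - (Bp x y)\<^sup>2" using assms by (simp add: Bpsimps Bp_sym[of y x] power2_eq_square algebra_simps)
  finally show ?thesis by (simp add: abs_square_le_1)
qed

lemma Bp_eq1: assumes "Bp x x = 1" "Bp y y = 1" "Bp x y \<ge> 1" shows "x = y"
proof -
  have "Bp (x - y) (x - y) = 2 - 2 * Bp x y" using assms by (simp add: Bpsimps Bp_sym[of y x])
  hence "Bp (x - y) (x - y) \<le> 0" using assms by simp
  thus ?thesis using Bp_pos[of "x - y"] by force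
qed

end



context chart begin

lemma U_semi: "x \<in> U \<Longrightarrow> b x x \<ge> 0" using posU[of x] by (cases "x = 0") (auto simp: bsimps)

definition ht where "ht x = - b x e0"
definition hx where "hx x = x + b x e0 *\<^sub>R e0"

lemma hx_e0: "b (hx x) e0 = 0" by (simp add: hx_def bsimps e0e0)
lemma e0_hx: "b e0 (hx x) = 0" using hx_e0 bsym by metis
lemma x_split: "x = hx x + ht x *\<^sub>R e0" by (simp add: hx_def ht_def)

lemma ipS_eq: "ipS b e0 x y = b (hx x) (hx y) + ht x * ht y"
proof -
  have "b x y = b (hx x + ht x *\<^sub>R e0) (hx y + ht y *\<^sub>R e0)" using x_split[of x] x_split[of y] by simp
  also have "\<dots> = b (hx x) (hx y) - ht x * ht y"
    by (simp add: bsimps hx_e0 e0_hx e0e0)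
  finally show ?thesis by (simp add: ipS_def ht_def algebra_simps)
qed

lemma ipW_eq: "ipW b x y = - b x y" by (simp add: ipW_def)

lemma hx_form: "u \<in> U \<Longrightarrow> hx (a *\<^sub>R e0 + u) = u" by (simp add: hx_def bsimps e0e0 ueU)
lemma ht_form: "u \<in> U \<Longrightarrow> ht (a *\<^sub>R e0 + u) = a" by (simp add: ht_def bsimps e0e0 ueU)

lemma Sp_iff: "x \<in> Sp b e0 U \<longleftrightarrow> hx x \<in> U \<and> b (hx x) (hx x) + (ht x)\<^sup>2 = 1"
proof
  assume "x \<in> Sp b e0 U"
  then obtain a u where "u \<in> U" "x = a *\<^sub>R e0 + u" "ipS b e0 x x = 1" by (auto simp: Sp_def)
  thus "hx x \<in> U \<and> b (hx x) (hx x) + (ht x)\<^sup>2 = 1" using hx_form ipS_eq[of x x] by (simp add: power2_eq_square)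
next
  assume a: "hx x \<in> U \<and> b (hx x) (hx x) + (ht x)\<^sup>2 = 1"
  have e: "x = ht x *\<^sub>R e0 + hx x" using x_split[of x] by (simp add: add.commute)
  have "ipS b e0 x x = 1" using a ipS_eq[of x x] by (simp add: power2_eq_square)
  with e a show "x \<in> Sp b e0 U" unfolding Sp_def by blast
qed

lemma Spp_iff: "x \<in> Sp_plus b e0 U \<longleftrightarrow> hx x \<in> U \<and> b (hx x) (hx x) + (ht x)\<^sup>2 = 1 \<and> ht x > 0"
  by (auto simp: Sp_plus_def Sp_iff ht_def)

lemma Spp_D: assumes "x \<in> Sp_plus b e0 U"
  shows "hx x \<in> U" "b (hx x) (hx x) = 1 - (ht x)\<^sup>2" "ht x > 0" "ht x \<le> 1"
proof -
  show "hx x \<in> U" "b (hx x) (hx x) = 1 - (ht x)\<^sup>2" "ht x > 0" using assms Spp_iff by auto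
  have "b (hx x) (hx x) \<ge> 0" using U_semi \<open>hx x \<in> U\<close> by blast
  hence "(ht x)\<^sup>2 \<le> 1" using \<open>b (hx x) (hx x) = 1 - (ht x)\<^sup>2\<close> by simp
  hence "\<bar>ht x\<bar> \<le> 1" using abs_square_le_1 by blast
  thus "ht x \<le> 1" by linarith
qed

lemma Sq_iff: "w \<in> Sq b e0 V \<longleftrightarrow> w \<in> W \<and> b w w = -1" by (auto simp: Sq_def W_iff)

lemma e0_Spp: "e0 \<in> Sp_plus b e0 U"
proof -
  have "hx e0 = 0" by (simp add: hx_def e0e0)
  moreover have "ht e0 = 1" by (simp add: ht_def e0e0)
  ultimately show ?thesis using Spp_iff U0 by (simp add: bsimps)
qed

lemma Bp_L: "hx x \<in> U \<Longrightarrow> hx y \<in> U \<Longrightarrow> Bp x y = ipS b e0 x y"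
proof -
  assume a: "hx x \<in> U" "hx y \<in> U"
  have d: "x - hx x = ht x *\<^sub>R e0" "y - hx y = ht y *\<^sub>R e0" by (simp_all add: hx_def ht_def)
  have px: "pU x = hx x" "pU y = hx y"
    using pU_char[OF a(1), of x] pU_char[OF a(2), of y] d Wscale[OF e0W] by auto
  hence "pW x = ht x *\<^sub>R e0" "pW y = ht y *\<^sub>R e0" using d by (simp_all add: pW_def)
  thus ?thesis using px by (simp add: Bp_def ipS_eq bsimps e0e0)
qed

lemma Bp_Sq: "w \<in> W \<Longrightarrow> w' \<in> W \<Longrightarrow> Bp w w' = ipW b w w'" using Bp_W by (simp add: ipW_def)

lemma ipS_range: "x \<in> Sp b e0 U \<Longrightarrow> y \<in> Sp b e0 U \<Longrightarrow> \<bar>ipS b e0 x y\<bar> \<le> 1"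
  using Bp_CS[of x y] Bp_L Sp_iff ipS_eq by (metis power2_eq_square)

lemma ipW_range: "x \<in> Sq b e0 V \<Longrightarrow> y \<in> Sq b e0 V \<Longrightarrow> \<bar>ipW b x y\<bar> \<le> 1"
  using Bp_CS[of x y] Bp_Sq Sq_iff by (metis ipW_eq minus_minus)

lemma Spp_Sp: "x \<in> Sp_plus b e0 U \<Longrightarrow> x \<in> Sp b e0 U" by (simp add: Sp_plus_def)

lemma lip_iff:
  assumes "\<psi> ` S \<subseteq> Sq b e0 V" "S \<subseteq> Sp b e0 U"
  shows "lip1 (ipS b e0) (ipW b) S \<psi> \<longleftrightarrow> (\<forall>x\<in>S. \<forall>y\<in>S. ipS b e0 x y \<le> ipW b (\<psi> x) (\<psi> y))"
proof -
  have "arccos (ipW b (\<psi> x) (\<psi> y)) \<le> arccos (ipS b e0 x y) \<longleftrightarrow> ipS b e0 x y \<le> ipW b (\<psi> x) (\<psi> y)"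
    if "x \<in> S" "y \<in> S" for x y
  proof -
    have r1: "\<bar>ipS b e0 x y\<bar> \<le> 1" using ipS_range assms that by blast
    have r2: "\<bar>ipW b (\<psi> x) (\<psi> y)\<bar> \<le> 1" using ipW_range assms that by blast
    show ?thesis
    proof
      assume "arccos (ipW b (\<psi> x) (\<psi> y)) \<le> arccos (ipS b e0 x y)"
      thus "ipS b e0 x y \<le> ipW b (\<psi> x) (\<psi> y)"
        using arccos_less_arccos[of "ipW b (\<psi> x) (\<psi> y)" "ipS b e0 x y"] r1 r2 by force
    next
      assume "ipS b e0 x y \<le> ipW b (\<psi> x) (\<psi> y)"
      thus "arccos (ipW b (\<psi> x) (\<psi> y)) \<le> arccos (ipS b e0 x y)"
        using arccos_le_arccos r1 r2 by force
    qed
  qed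
  thus ?thesis by (auto simp: lip1_def)
qed

lemma Psi_eq: assumes "u \<in> Sp_plus b e0 U" shows "Psi b e0 u w = (1 / ht u) *\<^sub>R (hx u + w)"
proof -
  note D = Spp_D[OF assms]
  define a where "a = ht u"
  have a: "a > 0" "b (hx u) (hx u) = 1 - a * a" using D by (auto simp: a_def power2_eq_square)
  have st: "stereo b e0 u = (1 / (1 + a)) *\<^sub>R hx u" by (simp add: stereo_def hx_def a_def ht_def)
  define n where "n = b (stereo b e0 u) (stereo b e0 u)"
  have "n = (1 / (1 + a)) * ((1 / (1 + a)) * b (hx u) (hx u))" by (simp add: n_def st bsimps)
  also have "\<dots> = (1 / (1 + a)) * ((1 / (1 + a)) * ((1 - a) * (1 + a)))" using a(2) by (simp add: algebra_simps)
  also have "\<dots> = (1 - a) / (1 + a)"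
  proof -
    have ne: "1 + a \<noteq> 0" using a(1) by simp
    have "(1 / (1 + a)) * ((1 - a) * (1 + a)) = 1 - a" using ne by (simp add: field_simps)
    thus ?thesis by simp
  qed
  finally have n: "n = (1 - a) / (1 + a)" .
  have ap: "1 + a > 0" using a by simp
  have n1: "1 - n = 2 * a / (1 + a)" using ap by (simp add: n field_simps)
  have n2: "1 + n = 2 / (1 + a)" using ap by (simp add: n field_simps)
  have n3: "1 / (1 - n) = (1 + a) / (2 * a)" using n1 by simp
  have "a * 2 + a * (a * 2) > 0" using a(1) by (intro add_pos_pos) auto
  hence nz: "a \<noteq> 0" "1 + a \<noteq> 0" "a * 2 + a * (a * 2) \<noteq> 0" using a ap by auto
  have c1: "1 / (1 - n) * (2 * (1 / (1 + a))) = 1 / a" unfolding n3 using nz by (simp add: field_simps)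
  have c2: "1 / (1 - n) * (1 + n) = 1 / a" unfolding n3 n2 using nz by (simp add: field_simps)
  have "Psi b e0 u w = (1 / (1 - n)) *\<^sub>R (2 *\<^sub>R ((1 / (1 + a)) *\<^sub>R hx u) + (1 + n) *\<^sub>R w)"
    by (simp add: Psi_def Let_def n_def st)
  also have "\<dots> = (1 / (1 - n) * (2 * (1 / (1 + a)))) *\<^sub>R hx u + (1 / (1 - n) * (1 + n)) *\<^sub>R w"
    by (simp add: scaleR_add_right)
  also have "\<dots> = (1 / a) *\<^sub>R (hx u + w)" using c1 c2 by (simp add: scaleR_add_right)
  finally show ?thesis by (simp add: a_def)
qed

lemma b_Psi: assumes "u \<in> Sp_plus b e0 U" "u' \<in> Sp_plus b e0 U" "w \<in> W" "w' \<in> W"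
  shows "b (Psi b e0 u w) (Psi b e0 u' w') = (b (hx u) (hx u') + b w w') / (ht u * ht u')"
proof -
  have h: "hx u \<in> U" "hx u' \<in> U" using Spp_D assms by auto
  have nz: "ht u \<noteq> 0" "ht u' \<noteq> 0" using Spp_D assms by (metis less_irrefl)+
  show ?thesis using oUW[OF h(1) assms(4)] oWU[OF h(2) assms(3)] nz
    by (simp add: Psi_eq[OF assms(1)] Psi_eq[OF assms(2)] bsimps field_simps)
qed

lemma pU_Psi: assumes "u \<in> Sp_plus b e0 U" "w \<in> W"
  shows "pU (Psi b e0 u w) = (1 / ht u) *\<^sub>R hx u" "pW (Psi b e0 u w) = (1 / ht u) *\<^sub>R w"
proof -
  have h: "hx u \<in> U" using Spp_D assms by auto
  have "pU (Psi b e0 u w) = (1 / ht u) *\<^sub>R (pU (hx u) + pU w)"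
    by (simp add: Psi_eq[OF assms(1)] linear_scale[OF pU_lin] linear_add[OF pU_lin])
  thus "pU (Psi b e0 u w) = (1 / ht u) *\<^sub>R hx u" using pU_U[OF h] pU_Wz[OF assms(2)] by simp
  thus "pW (Psi b e0 u w) = (1 / ht u) *\<^sub>R w" by (simp add: pW_def Psi_eq[OF assms(1)] scaleR_add_right)
qed

definition rr where "rr P = sqrt (1 + b (pU P) (pU P))"
definition base where "base P = (1 / rr P) *\<^sub>R (e0 + pU P)"
definition fib where "fib P = (1 / rr P) *\<^sub>R pW P"

lemma rr_pos: "rr P > 0" and rr_sq: "(rr P)\<^sup>2 = 1 + b (pU P) (pU P)"
proof -
  have "1 + b (pU P) (pU P) > 0" using U_semi[OF pU_in] by (smt (verit))
  thus "rr P > 0" "(rr P)\<^sup>2 = 1 + b (pU P) (pU P)" by (simp_all add: rr_def)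
qed

lemma ht_base: "ht (base P) = 1 / rr P" by (simp add: base_def ht_def bsimps e0e0 ueU[OF pU_in])
lemma hx_base: "hx (base P) = (1 / rr P) *\<^sub>R pU P"
proof -
  have "b (base P) e0 = - (1 / rr P)" using ht_base[of P] by (simp add: ht_def)
  thus ?thesis by (simp add: hx_def base_def scaleR_add_right)
qed
  
lemma base_Spp: "base P \<in> Sp_plus b e0 U"
  unfolding Spp_iff ht_base hx_base
proof (intro conjI)
  show "(1 / rr P) *\<^sub>R pU P \<in> U" using Uscale pU_in by blast
  show "0 < 1 / rr P" using rr_pos by simp
  have "b ((1 / rr P) *\<^sub>R pU P) ((1 / rr P) *\<^sub>R pU P) + (1 / rr P)\<^sup>2 = (b (pU P) (pU P) + 1) / (rr P)\<^sup>2"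
    using rr_pos[of P] by (simp add: bsimps power2_eq_square field_simps)
  also have "\<dots> = 1"
  proof -
    have "(rr P)\<^sup>2 > 0" using rr_pos[of P] by simp
    thus ?thesis using rr_sq[of P] by simp
  qed
  finally show "b ((1 / rr P) *\<^sub>R pU P) ((1 / rr P) *\<^sub>R pU P) + (1 / rr P)\<^sup>2 = 1" .
qed

lemma fib_Sq: assumes "b P P = -1" shows "fib P \<in> Sq b e0 V"
  unfolding Sq_iff
proof
  show "fib P \<in> W" using Wscale pW_in by (simp add: fib_def)
  have "b (pW P) (pW P) = -1 - b (pU P) (pU P)" using b_split[of P P] assms by simp
  hence "b (pW P) (pW P) = - (rr P)\<^sup>2" using rr_sq by simp
  thus "b (fib P) (fib P) = -1" using rr_pos[of P] by (simp add: fib_def bsimps power2_eq_square)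
qed

lemma Psi_base_fib: "Psi b e0 (base P) (fib P) = P"
proof -
  have "Psi b e0 (base P) (fib P) = rr P *\<^sub>R ((1 / rr P) *\<^sub>R pU P + (1 / rr P) *\<^sub>R pW P)"
    using rr_pos[of P] by (simp add: Psi_eq[OF base_Spp] ht_base hx_base fib_def)
  also have "\<dots> = pU P + pW P" using rr_pos[of P] by (simp add: scaleR_add_right)
  finally show ?thesis by (simp add: pUW)
qed

lemma Psi_quad: assumes "u \<in> Sp_plus b e0 U" "w \<in> Sq b e0 V" shows "b (Psi b e0 u w) (Psi b e0 u w) = -1"
proof -
  note D = Spp_D[OF assms(1)]
  have w: "w \<in> W" "b w w = -1" using assms(2) Sq_iff by auto
  have "b (Psi b e0 u w) (Psi b e0 u w) = (1 - (ht u)\<^sup>2 - 1) / (ht u * ht u)"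
    using b_Psi[OF assms(1) assms(1) w(1) w(1)] D w by simp
  thus ?thesis using D(3) by (simp add: power2_eq_square)
qed

lemma base_Psi: assumes "u \<in> Sp_plus b e0 U" "w \<in> Sq b e0 V" shows "base (Psi b e0 u w) = u" "fib (Psi b e0 u w) = w"
proof -
  note D = Spp_D[OF assms(1)]
  have w: "w \<in> W" using assms(2) Sq_iff by auto
  let ?P = "Psi b e0 u w"
  have "(rr ?P)\<^sup>2 = 1 + (1 - (ht u)\<^sup>2) / (ht u)\<^sup>2"
    using rr_sq[of ?P] pU_Psi[OF assms(1) w] D by (simp add: bsimps power2_eq_square)
  also have "\<dots> = (1 / ht u)\<^sup>2" using D(3) by (simp add: field_simps)
  finally have "rr ?P = 1 / ht u" using rr_pos[of ?P] D(3)
    by (metis less_eq_real_def power2_eq_iff_nonneg zero_le_divide_1_iff)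
  hence r: "1 / rr ?P = ht u" by simp
  show "base ?P = u" unfolding base_def r pU_Psi[OF assms(1) w]
    using D(3) x_split[of u] by (simp add: scaleR_add_right algebra_simps)
  show "fib ?P = w" unfolding fib_def r pU_Psi[OF assms(1) w] using D(3) by simp
qed

end

locale graph = chart +
  fixes \<phi> :: "'a \<Rightarrow> 'a"
  assumes gm: "graph_map b e0 U V \<phi>"
begin

abbreviation "SP \<equiv> Sp_plus b e0 U"
abbreviation "MM \<equiv> graph_of b e0 U \<phi>"

lemma phi_Sq: "u \<in> SP \<Longrightarrow> \<phi> u \<in> Sq b e0 V" using gm by (auto simp: graph_map_def)
lemma phi_W: "u \<in> SP \<Longrightarrow> \<phi> u \<in> W" using phi_Sq Sq_iff by blast
lemma phi_lip: "u \<in> SP \<Longrightarrow> v \<in> SP \<Longrightarrow> ipS b e0 u v \<le> ipW b (\<phi> u) (\<phi> v)"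
  using gm lip_iff[of \<phi> SP] phi_Sq Spp_Sp by (auto simp: graph_map_def)

lemma memM: "P \<in> MM \<longleftrightarrow> b P P = -1 \<and> \<phi> (base P) = fib P"
proof
  assume "P \<in> MM"
  then obtain u where u: "u \<in> SP" "P = Psi b e0 u (\<phi> u)" by (auto simp: graph_of_def)
  thus "b P P = -1 \<and> \<phi> (base P) = fib P" using Psi_quad base_Psi phi_Sq by simp
next
  assume a: "b P P = -1 \<and> \<phi> (base P) = fib P"
  hence "P = Psi b e0 (base P) (\<phi> (base P))" using Psi_base_fib by simp
  thus "P \<in> MM" using base_Spp by (auto simp: graph_of_def)
qed

lemma M_quad: "P \<in> MM \<Longrightarrow> b P P = -1" using memM by blast

lemma M_pt: "u \<in> SP \<Longrightarrow> Psi b e0 u (\<phi> u) \<in> MM" by (auto simp: graph_of_def)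

lemma b_pts: assumes "u \<in> SP" "v \<in> SP" "w \<in> W" "w' \<in> W"
  shows "b (Psi b e0 u w) (Psi b e0 v w') = (ipS b e0 u v - ipW b w w') / (ht u * ht v) - 1"
  using b_Psi[OF assms] Spp_D[OF assms(1)] Spp_D[OF assms(2)] by (simp add: ipS_eq ipW_eq field_simps)

lemma M_achronal: assumes "P \<in> MM" "Q \<in> MM" shows "b P Q \<le> -1"
proof -
  obtain u v where uv: "u \<in> SP" "v \<in> SP" "P = Psi b e0 u (\<phi> u)" "Q = Psi b e0 v (\<phi> v)"
    using assms by (auto simp: graph_of_def)
  have "ipS b e0 u v - ipW b (\<phi> u) (\<phi> v) \<le> 0" using phi_lip uv by simp
  moreover have "ht u * ht v > 0" using Spp_D uv by simp
  ultimately show ?thesis using b_pts[OF uv(1,2) phi_W[OF uv(1)] phi_W[OF uv(2)]] uv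
    by (simp add: divide_nonpos_pos)
qed

lemma M_max: assumes "b X X = -1" "P \<in> MM" "pU X = pU P" "b X P \<le> -1" shows "X = P"
proof -
  have bP: "b P P = -1" using M_quad assms(2) by blast
  have "b (X - P) (X - P) = -2 - 2 * b X P" using assms(1) bP by (simp add: bsimps bsym[of P X])
  hence "b (X - P) (X - P) \<ge> 0" using assms(4) by simp
  moreover have "pU (X - P) = 0" using assms(3) by (simp add: linear_diff[OF pU_lin])
  hence "X - P \<in> W" using pU_W[of "X - P"] by simp
  ultimately show ?thesis using W_neg[of "X - P"] by force
qed

lemma M_inj_pU: assumes "P \<in> MM" "Q \<in> MM" "pU P = pU Q" shows "P = Q"
  using M_max[OF M_quad[OF assms(1)] assms(2) assms(3) M_achronal[OF assms(1,2)]] .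

end




context bform begin

lemma geod_line:
  assumes "complete_lightlike_geodesic b \<gamma>"
  shows "\<exists>P v. v \<noteq> 0 \<and> b v v = 0 \<and> b P P = -1 \<and> b P v = 0 \<and> (\<forall>t. \<gamma> t = P + t *\<^sub>R v)"
proof -
  obtain g1 g2 where G: "\<And>t. (\<gamma> has_vector_derivative g1 t) (at t)" "\<And>t. (g1 has_vector_derivative g2 t) (at t)"
    "\<And>t. \<gamma> t \<in> Hpq b" "\<And>t. g2 t \<in> span {\<gamma> t}" "\<And>t. b (g1 t) (g1 t) = 0" "\<And>t. g1 t \<noteq> 0"
    using assms unfolding complete_lightlike_geodesic_def by metis
  have q: "b (\<gamma> t) (\<gamma> t) = -1" for t using G(3) by (simp add: Hpq_def)
  have o: "b (\<gamma> t) (g1 t) = 0" for t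
  proof -
    have "((\<lambda>t. b (\<gamma> t) (\<gamma> t)) has_real_derivative (b (\<gamma> t) (g1 t) + b (g1 t) (\<gamma> t))) (at t)"
      using b_vd[OF G(1) G(1)] .
    moreover have "((\<lambda>t. b (\<gamma> t) (\<gamma> t)) has_real_derivative 0) (at t)"
      using q by simp
    ultimately have "b (\<gamma> t) (g1 t) + b (g1 t) (\<gamma> t) = 0" using DERIV_unique by blast
    thus ?thesis using bsym by (simp add: bsym[of "g1 t"])
  qed
  have z: "g2 t = 0" for t
  proof -
    obtain c where c: "g2 t = c *\<^sub>R \<gamma> t" using G(4)[of t] by (auto simp: span_singleton)
    have "((\<lambda>t. b (\<gamma> t) (g1 t)) has_real_derivative (b (\<gamma> t) (g2 t) + b (g1 t) (g1 t))) (at t)"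
      using b_vd[OF G(1) G(2)] .
    moreover have "((\<lambda>t. b (\<gamma> t) (g1 t)) has_real_derivative 0) (at t)"
      using o by simp
    ultimately have "b (\<gamma> t) (g2 t) + b (g1 t) (g1 t) = 0" using DERIV_unique by blast
    hence "c = 0" using c G(5) q by (simp add: bsimps)
    thus ?thesis using c by simp
  qed
  have d0: "(g1 has_vector_derivative 0) (at t within UNIV)" for t using G(2)[of t] z[of t] by simp
  obtain v where v0: "\<And>t. t \<in> UNIV \<Longrightarrow> g1 t = v"
    using has_vector_derivative_zero_constant[OF convex_UNIV, of g1] d0 by blast
  have v: "g1 t = v" for t using v0 by simp
  have "((\<lambda>t. \<gamma> t - t *\<^sub>R v) has_vector_derivative 0) (at t within UNIV)" for t
  proof -
    have s: "((\<lambda>x. x *\<^sub>R v) has_vector_derivative v) (at t)"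
      using bounded_linear_imp_has_derivative[OF bounded_linear_scaleR_left, of v "at t"]
      by (simp add: has_vector_derivative_def)
    have "((\<lambda>t. \<gamma> t - t *\<^sub>R v) has_vector_derivative (v - v)) (at t)"
      using G(1)[of t] v s by (intro has_vector_derivative_diff) auto
    thus ?thesis by simp
  qed
  then obtain P where P0: "\<And>t. t \<in> UNIV \<Longrightarrow> \<gamma> t - t *\<^sub>R v = P"
    using has_vector_derivative_zero_constant[OF convex_UNIV, of "\<lambda>t. \<gamma> t - t *\<^sub>R v"] by blast
  have P: "\<gamma> t - t *\<^sub>R v = P" for t using P0 by simp
  have gt: "\<gamma> t = P + t *\<^sub>R v" for t using P[of t] by (simp add: algebra_simps)
  show ?thesis
    apply (rule exI[of _ P], rule exI[of _ v])
    using G(5,6)[of 0] v q[of 0] o[of 0] gt by simp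
qed

lemma line_geod:
  assumes "v \<noteq> 0" "b v v = 0" "b P P = -1" "b P v = 0"
  shows "complete_lightlike_geodesic b (\<lambda>t. P + t *\<^sub>R v)"
proof -
  have d1: "((\<lambda>t. P + t *\<^sub>R v) has_vector_derivative v) (at t)" for t :: real
  proof -
    have "((\<lambda>t. t *\<^sub>R v) has_derivative (\<lambda>t. t *\<^sub>R v)) (at t)"
      by (rule bounded_linear_imp_has_derivative[OF bounded_linear_scaleR_left])
    hence "((\<lambda>t. P + t *\<^sub>R v) has_derivative (\<lambda>h. 0 + h *\<^sub>R v)) (at t)"
      by (intro has_derivative_add has_derivative_const)
    thus ?thesis by (simp add: has_vector_derivative_def)
  qed
  have d2: "((\<lambda>t. v) has_vector_derivative 0) (at t)" for t :: real by simp
  have h: "P + t *\<^sub>R v \<in> Hpq b" for t :: real using assms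
    by (simp add: Hpq_def bsimps bsym[of v P])
  show ?thesis unfolding complete_lightlike_geodesic_def
    using d1 d2 h assms by (intro exI[of _ "\<lambda>t. v"] exI[of _ "\<lambda>t. 0"]) (auto simp: span_zero)
qed

end

context chart begin

lemma norm_Bp: "\<exists>C>0. \<forall>x. (norm x)\<^sup>2 \<le> C * Bp x x"
proof -
  obtain c where c: "c > 0" "\<And>x. c * (norm x)\<^sup>2 \<le> Bp x x" using Bp_lower by blast
  have "(norm x)\<^sup>2 \<le> (1/c) * Bp x x" for x using c(2)[of x] c(1) by (simp add: field_simps)
  thus ?thesis using c(1) by (intro exI[of _ "1/c"]) auto
qed

lemma Bp_norm: "\<exists>K>0. \<forall>x. Bp x x \<le> K * (norm x)\<^sup>2"
proof -
  obtain K where K: "K > 0" "\<And>x y. \<bar>Bp x y\<bar> \<le> K * norm x * norm y" using Bp_upper by blast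
  have "Bp x x \<le> K * (norm x)\<^sup>2" for x using K(2)[of x x] by (simp add: power2_eq_square abs_le_iff)
  thus ?thesis using K(1) by blast
qed

lemma Bp_unit_dist: "Bp x x = 1 \<Longrightarrow> Bp y y = 1 \<Longrightarrow> Bp (x - y) (x - y) = 2 - 2 * Bp x y"
  by (simp add: Bpsimps Bp_sym[of y x])

lemma Bp_Spp: "u \<in> Sp_plus b e0 U \<Longrightarrow> Bp u u = 1"
  using Bp_L[of u u] Spp_D[of u] ipS_eq[of u u] by (simp add: power2_eq_square)

lemma Bp_Sqq: "w \<in> Sq b e0 V \<Longrightarrow> Bp w w = 1"
  using Bp_W[of w w] Sq_iff by simp

lemma Bp_Spp2: "u \<in> Sp_plus b e0 U \<Longrightarrow> v \<in> Sp_plus b e0 U \<Longrightarrow> Bp u v = ipS b e0 u v"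
  using Bp_L Spp_D by blast

lemma Bp_Sqq2: "w \<in> Sq b e0 V \<Longrightarrow> w' \<in> Sq b e0 V \<Longrightarrow> Bp w w' = ipW b w w'"
  using Bp_Sq Sq_iff by blast

lemma Sq_closed: "closed (Sq b e0 V)"
proof -
  have "closed W" using subW closed_subspace by blast
  moreover have "closed {w. b w w = -1}"
    using continuous_closed_preimage_constant[of UNIV "\<lambda>w. b w w" "-1"] b_cont[OF continuous_on_id continuous_on_id]
    by simp
  ultimately have "closed (W \<inter> {w. b w w = -1})" by blast
  moreover have "W \<inter> {w. b w w = -1} = Sq b e0 V" using Sq_iff by auto
  ultimately show ?thesis by simp
qed

end

context graph begin

lemma phi_norm_lip: "\<exists>C>0. \<forall>u\<in>SP. \<forall>v\<in>SP. norm (\<phi> u - \<phi> v) \<le> C * norm (u - v)"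
proof -
  obtain C where C: "C > 0" "\<And>x. (norm x)\<^sup>2 \<le> C * Bp x x" using norm_Bp by blast
  obtain K where K: "K > 0" "\<And>x. Bp x x \<le> K * (norm x)\<^sup>2" using Bp_norm by blast
  have "norm (\<phi> u - \<phi> v) \<le> sqrt (C * K) * norm (u - v)" if "u \<in> SP" "v \<in> SP" for u v
  proof -
    have "Bp (\<phi> u - \<phi> v) (\<phi> u - \<phi> v) = 2 - 2 * ipW b (\<phi> u) (\<phi> v)"
      using Bp_unit_dist Bp_Sqq Bp_Sqq2 phi_Sq that by simp
    also have "\<dots> \<le> 2 - 2 * ipS b e0 u v" using phi_lip that by simp
    also have "\<dots> = Bp (u - v) (u - v)" using Bp_unit_dist Bp_Spp Bp_Spp2 that by simp
    finally have B: "Bp (\<phi> u - \<phi> v) (\<phi> u - \<phi> v) \<le> Bp (u - v) (u - v)" .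
    have "(norm (\<phi> u - \<phi> v))\<^sup>2 \<le> C * Bp (\<phi> u - \<phi> v) (\<phi> u - \<phi> v)" by (rule C(2))
    also have "\<dots> \<le> C * Bp (u - v) (u - v)" using B C(1) by (simp add: mult_left_mono)
    also have "\<dots> \<le> C * (K * (norm (u - v))\<^sup>2)" using K(2)[of "u - v"] C(1) by (simp add: mult_left_mono)
    also have "\<dots> = (sqrt (C * K) * norm (u - v))\<^sup>2" using C(1) K(1) by (simp add: power_mult_distrib)
    finally have "(norm (\<phi> u - \<phi> v))\<^sup>2 \<le> (sqrt (C * K) * norm (u - v))\<^sup>2" .
    thus ?thesis by (rule power2_le_imp_le) (use C(1) K(1) in simp)
  qed
  thus ?thesis using C(1) K(1) by (intro exI[of _ "sqrt (C*K)"]) auto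
qed

lemma phi_ucont: "uniformly_continuous_on SP \<phi>"
proof -
  obtain C where C: "C > 0" "\<And>u v. u \<in> SP \<Longrightarrow> v \<in> SP \<Longrightarrow> norm (\<phi> u - \<phi> v) \<le> C * norm (u - v)"
    using phi_norm_lip by blast
  show ?thesis unfolding uniformly_continuous_on_def
  proof (intro allI impI)
    fix e :: real assume e: "e > 0"
    show "\<exists>d>0. \<forall>x\<in>SP. \<forall>x'\<in>SP. dist x' x < d \<longrightarrow> dist (\<phi> x') (\<phi> x) < e"
    proof (intro exI[of _ "e / C"] conjI ballI impI)
      show "e / C > 0" using e C by simp
      fix x x' assume xx: "x \<in> SP" "x' \<in> SP" "dist x' x < e / C"
      have "dist (\<phi> x') (\<phi> x) \<le> C * dist x' x" using C(2)[OF xx(2,1)] by (simp add: dist_norm)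
      also have "\<dots> < C * (e / C)" using mult_strict_left_mono[OF xx(3) C(1)] .
      finally show "dist (\<phi> x') (\<phi> x) < e" using C(1) by simp
    qed
  qed
qed

lemma phi_cont: "continuous_on SP \<phi>" using phi_ucont uniformly_continuous_imp_continuous by blast

lemma M_over: "b X X = -1 \<Longrightarrow> \<exists>R\<in>MM. pU R = pU X"
proof -
  assume "b X X = -1"
  let ?R = "Psi b e0 (base X) (\<phi> (base X))"
  have "?R \<in> MM" using M_pt base_Spp by blast
  moreover have "pU ?R = pU X"
    using pU_Psi(1)[OF base_Spp phi_W[OF base_Spp]] ht_base hx_base rr_pos[of X] by simp
  ultimately show ?thesis by blast
qed

lemma line_perp: assumes "\<And>t. P + t *\<^sub>R v \<in> MM" "Q \<in> MM" shows "b Q v = 0"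
proof (rule ccontr)
  assume ne: "b Q v \<noteq> 0"
  define t where "t = - b Q P / b Q v"
  have "b Q (P + t *\<^sub>R v) \<le> -1" using M_achronal[OF assms(2) assms(1)] .
  moreover have "b Q (P + t *\<^sub>R v) = 0" using ne by (simp add: t_def bsimps)
  ultimately show False by simp
qed

lemma line_inv: assumes L: "\<And>t. P + t *\<^sub>R v \<in> MM" and vv: "b v v = 0" and Q: "Q \<in> MM"
  shows "Q + s *\<^sub>R v \<in> MM"
proof -
  let ?X = "Q + s *\<^sub>R v"
  have Qv: "b Q v = 0" using line_perp[OF L Q] .
  have XX: "b ?X ?X = -1" using M_quad[OF Q] Qv vv by (simp add: bsimps bsym[of v Q])
  obtain R where R: "R \<in> MM" "pU R = pU ?X" using M_over[OF XX] by blast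
  have "b ?X R = b Q R" using line_perp[OF L R(1)] by (simp add: bsimps bsym[of v R])
  hence "b ?X R \<le> -1" using M_achronal[OF Q R(1)] by simp
  hence "?X = R" using M_max[OF XX R(1) R(2)[symmetric]] by simp
  thus ?thesis using R(1) by simp
qed

lemma MM_ne: "MM \<noteq> {}" using M_pt[OF e0_Spp] by blast

lemma contains_iff_line: "contains_lightlike_geodesic b MM \<longleftrightarrow>
   (\<exists>P v. v \<noteq> 0 \<and> b v v = 0 \<and> (\<forall>t. P + t *\<^sub>R v \<in> MM))"
proof
  assume "contains_lightlike_geodesic b MM"
  then obtain \<gamma> where g: "complete_lightlike_geodesic b \<gamma>" "range \<gamma> \<subseteq> MM"
    by (auto simp: contains_lightlike_geodesic_def)
  obtain P v where "v \<noteq> 0" "b v v = 0" "\<forall>t. \<gamma> t = P + t *\<^sub>R v" using geod_line[OF g(1)] by blast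
  thus "\<exists>P v. v \<noteq> 0 \<and> b v v = 0 \<and> (\<forall>t. P + t *\<^sub>R v \<in> MM)" using g(2) by (metis rangeI subsetD)
next
  assume "\<exists>P v. v \<noteq> 0 \<and> b v v = 0 \<and> (\<forall>t. P + t *\<^sub>R v \<in> MM)"
  then obtain P v where pv: "v \<noteq> 0" "b v v = 0" "\<And>t. P + t *\<^sub>R v \<in> MM" by blast
  have "b P P = -1" using M_quad pv(3)[of 0] by simp
  moreover have "b P v = 0" using line_perp[OF pv(3) pv(3)[of 0]] by simp
  ultimately have "complete_lightlike_geodesic b (\<lambda>t. P + t *\<^sub>R v)" using line_geod pv by blast
  moreover have "range (\<lambda>t. P + t *\<^sub>R v) \<subseteq> MM" using pv(3) by auto
  ultimately show "contains_lightlike_geodesic b MM" by (auto simp: contains_lightlike_geodesic_def)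
qed

lemma contains_iff_foliated: "contains_lightlike_geodesic b MM \<longleftrightarrow> foliated_by_lightlike_geodesics b MM"
proof
  assume "contains_lightlike_geodesic b MM"
  then obtain P v where pv: "v \<noteq> 0" "b v v = 0" "\<And>t. P + t *\<^sub>R v \<in> MM" using contains_iff_line by blast
  define F where "F = (\<lambda>Q. range (\<lambda>t. Q + t *\<^sub>R v)) ` MM"
  show "foliated_by_lightlike_geodesics b MM" unfolding foliated_by_lightlike_geodesics_def
  proof (intro exI[of _ F] conjI ballI impI)
    fix L assume "L \<in> F"
    then obtain Q where Q: "Q \<in> MM" "L = range (\<lambda>t. Q + t *\<^sub>R v)" by (auto simp: F_def)
    have "complete_lightlike_geodesic b (\<lambda>t. Q + t *\<^sub>R v)"
      using line_geod[OF pv(1,2) M_quad[OF Q(1)] line_perp[OF pv(3) Q(1)]] .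
    thus "\<exists>\<gamma>. complete_lightlike_geodesic b \<gamma> \<and> L = range \<gamma>" using Q(2) by blast
  next
    fix L L' assume LL: "L \<in> F" "L' \<in> F" "L \<noteq> L'"
    then obtain Q Q' where Q: "L = range (\<lambda>t. Q + t *\<^sub>R v)" "L' = range (\<lambda>t. Q' + t *\<^sub>R v)"
      by (auto simp: F_def)
    show "L \<inter> L' = {}"
    proof (rule ccontr)
      assume "L \<inter> L' \<noteq> {}"
      then obtain t t' where "Q + t *\<^sub>R v = Q' + t' *\<^sub>R v" using Q by auto
      hence e: "Q' = Q + (t - t') *\<^sub>R v" by (simp add: algebra_simps)
      have "range (\<lambda>s. Q' + s *\<^sub>R v) = range (\<lambda>s. Q + s *\<^sub>R v)"
      proof (intro set_eqI iffI)
        fix x assume "x \<in> range (\<lambda>s. Q' + s *\<^sub>R v)"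
        then obtain s where "x = Q' + s *\<^sub>R v" by auto
        hence "x = Q + (t - t' + s) *\<^sub>R v" using e by (simp add: algebra_simps)
        thus "x \<in> range (\<lambda>s. Q + s *\<^sub>R v)" by auto
      next
        fix x assume "x \<in> range (\<lambda>s. Q + s *\<^sub>R v)"
        then obtain s where "x = Q + s *\<^sub>R v" by auto
        hence "x = Q' + (s - (t - t')) *\<^sub>R v" using e by (simp add: algebra_simps)
        thus "x \<in> range (\<lambda>s. Q' + s *\<^sub>R v)" by auto
      qed
      thus False using LL(3) Q by simp
    qed
  next
    show "\<Union> F = MM"
    proof
      show "\<Union> F \<subseteq> MM" using line_inv[OF pv(3) pv(2)] by (auto simp: F_def)
      show "MM \<subseteq> \<Union> F"
      proof
        fix Q assume "Q \<in> MM"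
        moreover have "Q \<in> range (\<lambda>t. Q + t *\<^sub>R v)" by (rule range_eqI[of _ _ 0]) simp
        ultimately show "Q \<in> \<Union> F" by (auto simp: F_def)
      qed
    qed
  qed
next
  assume "foliated_by_lightlike_geodesics b MM"
  then obtain F where F: "\<forall>L\<in>F. \<exists>\<gamma>. complete_lightlike_geodesic b \<gamma> \<and> L = range \<gamma>" "\<Union>F = MM"
    by (auto simp: foliated_by_lightlike_geodesics_def)
  obtain L where "L \<in> F" using F(2) MM_ne by auto
  then obtain \<gamma> where "complete_lightlike_geodesic b \<gamma>" "L = range \<gamma>" using F(1) by blast
  moreover have "L \<subseteq> MM" using F(2) \<open>L \<in> F\<close> by auto
  ultimately show "contains_lightlike_geodesic b MM" by (auto simp: contains_lightlike_geodesic_def)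
qed

end



lemma path_tendsto_gen:
  "((\<lambda>t. sin t *\<^sub>R (u::'a::real_normed_vector) + cos t *\<^sub>R v0) \<longlongrightarrow> sin (pi/2) *\<^sub>R u + cos (pi/2) *\<^sub>R v0) (at (pi/2))"
  by (intro tendsto_intros tendsto_ident_at)

lemma path_tendsto_gen2:
  "((\<lambda>t. sin t *\<^sub>R (u::'a::real_normed_vector) + cos t *\<^sub>R v0) \<longlongrightarrow> u) (at_left (pi/2))"
proof -
  have "((\<lambda>t. sin t *\<^sub>R (u::'a::real_normed_vector) + cos t *\<^sub>R v0) \<longlongrightarrow> u) (at (pi/2))"
    using path_tendsto_gen[of u v0] by simp
  thus ?thesis by (rule tendsto_within_subset) simp
qed

context chart begin

lemma eq_iff: "u \<in> equator b U \<longleftrightarrow> u \<in> U \<and> b u u = 1" by (simp add: equator_def)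

lemma hx_U: "u \<in> U \<Longrightarrow> hx u = u" by (simp add: hx_def ueU)
lemma ht_U: "u \<in> U \<Longrightarrow> ht u = 0" by (simp add: ht_def ueU)
lemma hx_e0': "hx e0 = 0" by (simp add: hx_def e0e0)
lemma ht_e0: "ht e0 = 1" by (simp add: ht_def e0e0)

lemma ipS_U: "u \<in> U \<Longrightarrow> ipS b e0 u v = b u (hx v)" by (simp add: ipS_eq hx_U ht_U)

lemma hx_lin: "hx (x + y) = hx x + hx y" "hx (c *\<^sub>R x) = c *\<^sub>R hx x"
  by (simp_all add: hx_def bsimps algebra_simps)
lemma ht_lin: "ht (x + y) = ht x + ht y" "ht (c *\<^sub>R x) = c * ht x"
  by (simp_all add: ht_def bsimps algebra_simps)

lemma path_Spp:
  assumes u: "u \<in> U" "b u u = 1" and v0: "v0 \<in> Sp_plus b e0 U" "b u (hx v0) = 0"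
    and t: "- (pi/2) < t" "t < pi/2"
  shows "sin t *\<^sub>R u + cos t *\<^sub>R v0 \<in> Sp_plus b e0 U"
    "ht (sin t *\<^sub>R u + cos t *\<^sub>R v0) = cos t * ht v0"
    "hx (sin t *\<^sub>R u + cos t *\<^sub>R v0) = sin t *\<^sub>R u + cos t *\<^sub>R hx v0"
proof -
  note D = Spp_D[OF v0(1)]
  show h1: "ht (sin t *\<^sub>R u + cos t *\<^sub>R v0) = cos t * ht v0" by (simp add: ht_lin ht_U[OF u(1)])
  show h2: "hx (sin t *\<^sub>R u + cos t *\<^sub>R v0) = sin t *\<^sub>R u + cos t *\<^sub>R hx v0" by (simp add: hx_lin hx_U[OF u(1)])
  have c: "cos t > 0" using t cos_gt_zero_pi by auto
  have "b (sin t *\<^sub>R u + cos t *\<^sub>R hx v0) (sin t *\<^sub>R u + cos t *\<^sub>R hx v0) + (cos t * ht v0)\<^sup>2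
        = (sin t)\<^sup>2 * b u u + (cos t)\<^sup>2 * (b (hx v0) (hx v0) + (ht v0)\<^sup>2) + 2 * sin t * cos t * b u (hx v0)"
    by (simp add: bsimps bsym[of "hx v0" u] power2_eq_square algebra_simps)
  also have "\<dots> = 1" using u(2) v0(2) D(2) by (simp add: sin_cos_squared_add)
  finally have "b (sin t *\<^sub>R u + cos t *\<^sub>R hx v0) (sin t *\<^sub>R u + cos t *\<^sub>R hx v0) + (cos t * ht v0)\<^sup>2 = 1" .
  moreover have "sin t *\<^sub>R u + cos t *\<^sub>R hx v0 \<in> U" using u(1) D(1) Uadd Uscale by blast
  moreover have "cos t * ht v0 > 0" using c D(3) by simp
  ultimately show "sin t *\<^sub>R u + cos t *\<^sub>R v0 \<in> Sp_plus b e0 U" unfolding Spp_iff h1 h2 by blast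
qed

lemma path_lim: "((\<lambda>t. sin t *\<^sub>R u + cos t *\<^sub>R v0) \<longlongrightarrow> (u::'a)) (at_left (pi/2))"
proof -
  show ?thesis by (rule path_tendsto_gen2)
qed

lemma ev_path: "eventually (\<lambda>t. - (pi/2) < t \<and> t < pi/2 \<and> 0 < t) (at_left (pi/2))"
proof -
  have "eventually (\<lambda>t. t \<in> {0<..<pi/2}) (at_left (pi/2))" by (rule eventually_at_left_real) simp
  thus ?thesis by eventually_elim auto
qed

lemma equator_closure: assumes "u \<in> equator b U" shows "u \<in> closure (Sp_plus b e0 U)" "u \<notin> Sp_plus b e0 U"
  "at u within Sp_plus b e0 U \<noteq> bot"
proof -
  have u: "u \<in> U" "b u u = 1" using assms eq_iff by auto
  have b0: "b u (hx e0) = 0" by (simp add: hx_e0' bsimps)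
  have "eventually (\<lambda>t. sin t *\<^sub>R u + cos t *\<^sub>R e0 \<in> closure (Sp_plus b e0 U)) (at_left (pi/2))"
    using ev_path by eventually_elim (use path_Spp(1)[OF u e0_Spp b0] closure_subset in auto)
  thus uc: "u \<in> closure (Sp_plus b e0 U)"
    using Lim_in_closed_set[OF closed_closure _ _ path_lim] by simp
  show un: "u \<notin> Sp_plus b e0 U" using Spp_iff ht_U[OF u(1)] by simp
  have "u islimpt Sp_plus b e0 U" using uc un by (simp add: closure_def)
  hence "\<not> trivial_limit (at u within Sp_plus b e0 U)" using trivial_limit_within by blast
  thus "at u within Sp_plus b e0 U \<noteq> bot" by simp
qed

end

context graph begin

lemma ext_lim: assumes "u \<in> equator b U"
  shows "(\<phi> \<longlongrightarrow> ext_map b e0 U \<phi> u) (at u within SP)" "ext_map b e0 U \<phi> u \<in> Sq b e0 V"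
proof -
  note C = equator_closure[OF assms]
  obtain l where l: "(\<phi> \<longlongrightarrow> l) (at u within SP)"
    using uniformly_continuous_on_extension_at_closure[OF phi_ucont C(1)] by blast
  have "ext_map b e0 U \<phi> u = l" using C(2,3) l tendsto_Lim[of "at u within SP" \<phi> l]
    by (simp add: ext_map_def trivial_limit_def)
  thus t: "(\<phi> \<longlongrightarrow> ext_map b e0 U \<phi> u) (at u within SP)" using l by simp
  have "eventually (\<lambda>x. \<phi> x \<in> Sq b e0 V) (at u within SP)"
    unfolding eventually_at_filter using phi_Sq by (auto intro!: always_eventually)
  thus "ext_map b e0 U \<phi> u \<in> Sq b e0 V" using Lim_in_closed_set[OF Sq_closed _ C(3) t] by blast
qed

lemma ext_lip: assumes "u \<in> equator b U" "y \<in> SP"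
  shows "ipS b e0 y u \<le> ipW b (\<phi> y) (ext_map b e0 U \<phi> u)"
proof -
  note C = equator_closure[OF assms(1)]
  let ?F = "at u within SP"
  have t1: "((\<lambda>z. ipS b e0 y z) \<longlongrightarrow> ipS b e0 y u) ?F"
    unfolding ipS_def by (intro tendsto_intros b_tendsto tendsto_ident_at)
  have t2: "((\<lambda>z. ipW b (\<phi> y) (\<phi> z)) \<longlongrightarrow> ipW b (\<phi> y) (ext_map b e0 U \<phi> u)) ?F"
    unfolding ipW_def by (intro tendsto_intros b_tendsto ext_lim(1)[OF assms(1)])
  have ev: "eventually (\<lambda>z. ipS b e0 y z \<le> ipW b (\<phi> y) (\<phi> z)) ?F"
    unfolding eventually_at_filter using phi_lip assms(2) by (auto intro!: always_eventually)
  show ?thesis using tendsto_le[OF _ t2 t1 ev] C(3) by (simp add: trivial_limit_def)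
qed

lemma ext_of_path:
  assumes u: "u \<in> equator b U" and w: "w \<in> Sq b e0 V"
    and P: "\<And>t. - (pi/2) < t \<Longrightarrow> t < pi/2 \<Longrightarrow> \<phi> (sin t *\<^sub>R u + cos t *\<^sub>R e0) = sin t *\<^sub>R w + cos t *\<^sub>R z"
  shows "ext_map b e0 U \<phi> u = w"
proof -
  have uU: "u \<in> U" "b u u = 1" using u eq_iff by auto
  have b0: "b u (hx e0) = 0" by (simp add: hx_e0' bsimps)
  let ?g = "\<lambda>t. sin t *\<^sub>R u + cos t *\<^sub>R e0"
  have "eventually (\<lambda>t. ?g t \<in> SP \<and> ?g t \<noteq> u) (at_left (pi/2))"
    using ev_path
  proof eventually_elim
    case (elim t)
    have "?g t \<in> SP" using path_Spp(1)[OF uU e0_Spp b0] elim by auto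
    moreover have "?g t \<noteq> u" using equator_closure(2)[OF u] \<open>?g t \<in> SP\<close> by auto
    ultimately show ?case by simp
  qed
  hence fl: "filterlim ?g (at u within SP) (at_left (pi/2))" using path_lim filterlim_at by blast
  have l1: "((\<lambda>t. \<phi> (?g t)) \<longlongrightarrow> ext_map b e0 U \<phi> u) (at_left (pi/2))"
    using filterlim_compose[OF ext_lim(1)[OF u] fl] .
  have l2': "((\<lambda>t. sin t *\<^sub>R w + cos t *\<^sub>R z) \<longlongrightarrow> w) (at_left (pi/2))" by (rule path_tendsto_gen2)
  have "eventually (\<lambda>t. sin t *\<^sub>R w + cos t *\<^sub>R z = \<phi> (?g t)) (at_left (pi/2))"
    using ev_path by eventually_elim (use P in auto)
  hence l2: "((\<lambda>t. \<phi> (?g t)) \<longlongrightarrow> w) (at_left (pi/2))" using l2' tendsto_cong by fastforce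
  show ?thesis using tendsto_unique[OF _ l1 l2] by (simp add: trivial_limit_def[symmetric])
qed

lemma line_from_path:
  assumes u: "u \<in> equator b U" and w: "w \<in> Sq b e0 V" and z: "z \<in> W"
    and P: "\<And>t. - (pi/2) < t \<Longrightarrow> t < pi/2 \<Longrightarrow> \<phi> (sin t *\<^sub>R u + cos t *\<^sub>R e0) = sin t *\<^sub>R w + cos t *\<^sub>R z"
  shows "contains_lightlike_geodesic b MM"
proof -
  have uU: "u \<in> U" "b u u = 1" using u eq_iff by auto
  have ww: "w \<in> W" "b w w = -1" using w Sq_iff by auto
  have b0: "b u (hx e0) = 0" by (simp add: hx_e0' bsimps)
  have L: "z + r *\<^sub>R (u + w) \<in> MM" for r
  proof -
    define t where "t = arctan r"
    have t: "- (pi/2) < t" "t < pi/2" using arctan_bounded t_def by auto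
    have c: "cos t > 0" using t cos_gt_zero_pi by auto
    let ?g = "sin t *\<^sub>R u + cos t *\<^sub>R e0"
    have gS: "?g \<in> SP" and hg: "ht ?g = cos t" and xg: "hx ?g = sin t *\<^sub>R u"
      using path_Spp[OF uU e0_Spp b0 t] by (auto simp: ht_e0 hx_e0')
    have "Psi b e0 ?g (\<phi> ?g) = (1 / cos t) *\<^sub>R (sin t *\<^sub>R u + (sin t *\<^sub>R w + cos t *\<^sub>R z))"
      using Psi_eq[OF gS] hg xg P[OF t] by simp
    also have "\<dots> = z + (sin t / cos t) *\<^sub>R (u + w)" using c by (simp add: scaleR_add_right algebra_simps)
    also have "sin t / cos t = r" using tan_arctan[of r] by (simp add: t_def tan_def)
    finally show ?thesis using M_pt[OF gS] by simp
  qed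
  have "b (u + w) u = 1" using oWU[OF uU(1) ww(1)] uU by (simp add: bsimps)
  hence "u + w \<noteq> 0" by (metis b_zeroL zero_neq_one)
  moreover have "b (u + w) (u + w) = 0" using oUW[OF uU(1) ww(1)] oWU[OF uU(1) ww(1)] uU ww by (simp add: bsimps)
  ultimately show ?thesis using contains_iff_line L by blast
qed

lemma nonadm_geod:
  assumes "\<not> admissible (asym_boundary b e0 U \<phi>)"
  shows "contains_lightlike_geodesic b MM"
proof -
  obtain x where x: "x \<noteq> 0" "ray x \<in> asym_boundary b e0 U \<phi>" "ray (- x) \<in> asym_boundary b e0 U \<phi>"
    using assms by (auto simp: admissible_def)
  obtain u1 where u1: "u1 \<in> equator b U" "ray x = ray (u1 + ext_map b e0 U \<phi> u1)"
    using x(2) by (auto simp: asym_boundary_def)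
  obtain u2 where u2: "u2 \<in> equator b U" "ray (- x) = ray (u2 + ext_map b e0 U \<phi> u2)"
    using x(3) by (auto simp: asym_boundary_def)
  define e1 where "e1 = ext_map b e0 U \<phi> u1"
  define e2 where "e2 = ext_map b e0 U \<phi> u2"
  have e1: "e1 \<in> W" "b e1 e1 = -1" using ext_lim(2)[OF u1(1)] Sq_iff by (auto simp: e1_def)
  have e2: "e2 \<in> W" "b e2 e2 = -1" using ext_lim(2)[OF u2(1)] Sq_iff by (auto simp: e2_def)
  have uu1: "u1 \<in> U" "b u1 u1 = 1" using u1(1) eq_iff by auto
  have uu2: "u2 \<in> U" "b u2 u2 = 1" using u2(1) eq_iff by auto
  have rayD: "\<exists>c>0. y = c *\<^sub>R z" if "ray z = ray y" "y \<noteq> 0" for y z :: 'a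
  proof -
    have "y \<in> ray y" by (auto simp: ray_def intro!: exI[of _ 1])
    thus ?thesis using that by (auto simp: ray_def)
  qed
  have "b (u1 + e1) u1 = 1" using oWU[OF uu1(1) e1(1)] uu1 by (simp add: bsimps)
  hence n1: "u1 + e1 \<noteq> 0" by (metis b_zeroL zero_neq_one)
  have "b (u2 + e2) u2 = 1" using oWU[OF uu2(1) e2(1)] uu2 by (simp add: bsimps)
  hence n2: "u2 + e2 \<noteq> 0" by (metis b_zeroL zero_neq_one)
  obtain c1 where c1: "c1 > 0" "u1 + e1 = c1 *\<^sub>R x" using rayD[OF u1(2)[folded e1_def] n1] by blast
  obtain c2 where c2: "c2 > 0" "u2 + e2 = c2 *\<^sub>R (- x)" using rayD[OF u2(2)[folded e2_def] n2] by blast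
  have "(c2 / c1) *\<^sub>R (u1 + e1) = - (u2 + e2)" using c1 c2 by simp
  hence "(c2 / c1) *\<^sub>R u1 + (c2 / c1) *\<^sub>R e1 = (- u2) + (- e2)" by (simp add: scaleR_add_right)
  hence sp: "(c2 / c1) *\<^sub>R u1 = - u2" "(c2 / c1) *\<^sub>R e1 = - e2"
    using uniqUW[of "(c2 / c1) *\<^sub>R u1" "(c2 / c1) *\<^sub>R e1" "- u2" "- e2"] uu1 uu2 e1 e2 Uscale Wscale Uneg Wneg
    by auto
  have "(c2 / c1) * (c2 / c1) = 1" using sp(1) uu1 uu2
    by (metis b_minusL b_minusR b_scaleL b_scaleR minus_minus mult.assoc mult.right_neutral)
  moreover have "c2 / c1 > 0" using c1 c2 by simp
  ultimately have "c2 / c1 = 1" by (metis mult_cancel_right1 mult_le_cancel_left1 mult_less_cancel_left1 not_less_iff_gr_or_eq)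
  hence m: "u2 = - u1" "e2 = - e1" using sp by auto
  have le: "ipS b e0 y u1 \<le> ipW b (\<phi> y) e1" "ipS b e0 y (- u1) \<le> ipW b (\<phi> y) (- e1)" if "y \<in> SP" for y
    using ext_lip[OF u1(1) that] ext_lip[OF u2(1) that] m by (auto simp: e1_def e2_def)
  have b0: "b u1 (hx e0) = 0" by (simp add: hx_e0' bsimps)
  let ?g = "\<lambda>t. sin t *\<^sub>R u1 + cos t *\<^sub>R e0"
  have gS: "?g t \<in> SP" if "- (pi/2) < t" "t < pi/2" for t using path_Spp(1)[OF uu1 e0_Spp b0 that] .
  have ipg: "ipS b e0 (?g t) u1 = sin t" for t
    using uu1 by (simp add: ipS_def bsimps e0e0 oeU ueU)
  have ipgg: "ipS b e0 (?g t) (?g s) = sin t * sin s + cos t * cos s" for t s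
    using uu1 by (simp add: ipS_def bsimps e0e0 oeU ueU algebra_simps)
  have pe: "ipW b (\<phi> (?g t)) e1 = sin t" if "- (pi/2) < t" "t < pi/2" for t
  proof -
    have "sin t \<le> ipW b (\<phi> (?g t)) e1" using le(1)[OF gS[OF that]] ipg by simp
    moreover have "- sin t \<le> - ipW b (\<phi> (?g t)) e1" using le(2)[OF gS[OF that]] ipg[of t]
      by (simp add: ipW_def ipS_def bsimps)
    ultimately show ?thesis by simp
  qed
  define zz where "zz t = (1 / cos t) *\<^sub>R (\<phi> (?g t) - sin t *\<^sub>R e1)" for t
  have phig: "\<phi> (?g t) = sin t *\<^sub>R e1 + cos t *\<^sub>R zz t" if "- (pi/2) < t" "t < pi/2" for t
  proof -
    have "cos t > 0" using that cos_gt_zero_pi by auto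
    thus ?thesis by (simp add: zz_def algebra_simps)
  qed
  have e1B: "Bp e1 e1 = 1" using e1 Bp_W by simp
  have phB: "Bp (\<phi> (?g t)) (\<phi> (?g t)) = 1" if "- (pi/2) < t" "t < pi/2" for t
    using Bp_Sqq phi_Sq gS that by blast
  have phe: "Bp (\<phi> (?g t)) e1 = sin t" if "- (pi/2) < t" "t < pi/2" for t
    using pe[OF that] Bp_Sq phi_W[OF gS[OF that]] e1(1) by simp
  have zW: "zz t \<in> W" if "- (pi/2) < t" "t < pi/2" for t
    unfolding zz_def using phi_W[OF gS[OF that]] e1(1) Wscale Wdiff by blast
  have zB: "Bp (zz t) (zz t) = 1" and ze: "Bp (zz t) e1 = 0" if "- (pi/2) < t" "t < pi/2" for t
  proof -
    have c: "cos t > 0" using that cos_gt_zero_pi by auto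
    define ph where "ph = \<phi> (?g t)"
    have A: "Bp (ph - sin t *\<^sub>R e1) (ph - sin t *\<^sub>R e1) = Bp ph ph - 2 * sin t * Bp ph e1 + sin t * sin t * Bp e1 e1"
      by (simp add: Bpsimps Bp_sym[of e1 ph] algebra_simps)
    also have "\<dots> = 1 - sin t * sin t" using phB[OF that] phe[OF that] e1B by (simp add: ph_def)
    also have "\<dots> = cos t * cos t" using cos_squared_eq[of t] by (simp add: power2_eq_square)
    finally have A2: "Bp (ph - sin t *\<^sub>R e1) (ph - sin t *\<^sub>R e1) = cos t * cos t" .
    have "Bp (zz t) (zz t) = (1 / cos t) * ((1 / cos t) * Bp (ph - sin t *\<^sub>R e1) (ph - sin t *\<^sub>R e1))"
      unfolding zz_def ph_def by (simp add: Bp_scaleL Bp_scaleR)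
    also have "\<dots> = 1" using c A2 by simp
    finally show "Bp (zz t) (zz t) = 1" .
    show "Bp (zz t) e1 = 0" unfolding zz_def using phe[OF that] e1B by (simp add: Bpsimps)
  qed
  have z0: "zz 0 = \<phi> e0" by (simp add: zz_def)
  have zconst: "zz t = \<phi> e0" if t: "- (pi/2) < t" "t < pi/2" for t
  proof -
    have t0: "- (pi/2) < (0::real)" "(0::real) < pi/2" by auto
    have c: "cos t > 0" using t cos_gt_zero_pi by auto
    have i0: "ipS b e0 (?g t) (?g 0) = sin t * sin 0 + cos t * cos 0" by (rule ipgg)
    have "sin t * sin 0 + cos t * cos 0 \<le> ipW b (\<phi> (?g t)) (\<phi> (?g 0))"
      using phi_lip[OF gS[OF t] gS[OF t0]] by (simp only: i0)
    also have "\<dots> = Bp (\<phi> (?g t)) (\<phi> (?g 0))" using Bp_Sqq2 phi_Sq gS t t0 by metis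
    also have "\<dots> = Bp (sin t *\<^sub>R e1 + cos t *\<^sub>R zz t) (zz 0)" using phig[OF t] z0 by simp
    also have "\<dots> = cos t * Bp (zz t) (zz 0)" using ze[OF t0] by (simp add: Bpsimps Bp_sym[of e1])
    finally have "cos t * 1 \<le> cos t * Bp (zz t) (zz 0)" by simp
    hence "Bp (zz t) (zz 0) \<ge> 1" using c by (simp add: mult_le_cancel_left)
    hence "zz t = zz 0" using Bp_eq1 zB[OF t] zB[OF t0] by blast
    thus ?thesis using z0 by simp
  qed
  show ?thesis
  proof (rule line_from_path[OF u1(1) _ phi_W[OF e0_Spp]])
    show "e1 \<in> Sq b e0 V" using e1 Sq_iff by blast
    fix t :: real assume t: "- (pi/2) < t" "t < pi/2"
    show "\<phi> (?g t) = sin t *\<^sub>R e1 + cos t *\<^sub>R \<phi> e0" using phig[OF t] zconst[OF t] by simp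
  qed
qed

end



context graph begin

lemma split_from_line:
  assumes v: "v \<noteq> 0" "b v v = 0" "\<And>t. P + t *\<^sub>R v \<in> MM"
  obtains u0 w0 where "u0 \<in> equator b U" "w0 \<in> Sq b e0 V"
    "\<And>v0. v0 \<in> SP \<Longrightarrow> ipS b e0 u0 v0 = 0 \<Longrightarrow> b (\<phi> v0) w0 = 0"
    "\<And>t v0. - (pi/2) < t \<Longrightarrow> t < pi/2 \<Longrightarrow> v0 \<in> SP \<Longrightarrow> ipS b e0 u0 v0 = 0 \<Longrightarrow>
       \<phi> (sin t *\<^sub>R u0 + cos t *\<^sub>R v0) = sin t *\<^sub>R w0 + cos t *\<^sub>R \<phi> v0"
proof -
  define vu where "vu = pU v"
  define vw where "vw = pW v"
  have vuU: "vu \<in> U" and vwW: "vw \<in> W" using pU_in pW_in by (auto simp: vu_def vw_def)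
  have vsum: "vu + vw = v" using pUW by (simp add: vu_def vw_def)
  have bs: "b vu vu + b vw vw = 0" using b_split[of v v] v(2) by (simp add: vu_def vw_def)
  have vu0: "vu \<noteq> 0"
  proof
    assume "vu = 0"
    hence "b vw vw = 0" using bs by (simp add: bsimps)
    hence "vw = 0" using W_def_neg vwW by blast
    thus False using \<open>vu = 0\<close> vsum v(1) by simp
  qed
  have bpos: "b vu vu > 0" using posU vuU vu0 by blast
  define c where "c = sqrt (b vu vu)"
  have c: "c > 0" "c * c = b vu vu" using bpos by (auto simp: c_def)
  define u0 where "u0 = (1 / c) *\<^sub>R vu"
  define w0 where "w0 = (1 / c) *\<^sub>R vw"
  have u0U: "u0 \<in> U" using Uscale vuU by (simp add: u0_def)
  have w0W: "w0 \<in> W" using Wscale vwW by (simp add: w0_def)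
  have u0u0: "b u0 u0 = 1" using c bpos by (simp add: u0_def bsimps)
  have ew: "b vw vw = - (c * c)" using bs c by simp
  have "b w0 w0 = (1 / c) * ((1 / c) * (- (c * c)))" by (simp add: w0_def bsimps ew)
  hence w0w0: "b w0 w0 = -1" using c(1) by (simp add: field_simps)
  have vc: "v = c *\<^sub>R (u0 + w0)" using c vsum by (simp add: u0_def w0_def scaleR_add_right)
  have u0E: "u0 \<in> equator b U" using u0U u0u0 eq_iff by blast
  have w0S: "w0 \<in> Sq b e0 V" using w0W w0w0 Sq_iff by blast
  have perp: "b (\<phi> v0) w0 = 0" if v0: "v0 \<in> SP" "ipS b e0 u0 v0 = 0" for v0
  proof -
    note D = Spp_D[OF v0(1)]
    have bx: "b u0 (hx v0) = 0" using v0(2) ipS_U[OF u0U] by simp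
    have R0: "Psi b e0 v0 (\<phi> v0) \<in> MM" using M_pt[OF v0(1)] .
    have "b (Psi b e0 v0 (\<phi> v0)) v = 0" using line_perp[OF v(3) R0] .
    hence "b (Psi b e0 v0 (\<phi> v0)) (u0 + w0) = 0" using vc c(1) by (simp add: bsimps)
    moreover have "b (Psi b e0 v0 (\<phi> v0)) (u0 + w0) = (1 / ht v0) * b (\<phi> v0) w0"
      using Psi_eq[OF v0(1)] bx oUW[OF D(1) w0W] oWU[OF u0U phi_W[OF v0(1)]]
      by (simp add: bsimps bsym[of "hx v0" u0])
    ultimately show ?thesis using D(3) by simp
  qed
  have main: "\<phi> (sin t *\<^sub>R u0 + cos t *\<^sub>R v0) = sin t *\<^sub>R w0 + cos t *\<^sub>R \<phi> v0"
    if t: "- (pi/2) < t" "t < pi/2" and v0: "v0 \<in> SP" "ipS b e0 u0 v0 = 0" for t v0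
  proof -
    note D = Spp_D[OF v0(1)]
    have bx: "b u0 (hx v0) = 0" using v0(2) ipS_U[OF u0U] by simp
    have ct: "cos t > 0" using t cos_gt_zero_pi by auto
    define a0 where "a0 = ht v0"
    define x0 where "x0 = hx v0"
    define ph where "ph = \<phi> v0"
    have a0: "a0 > 0" using D(3) by (simp add: a0_def)
    note PS = path_Spp[OF u0U u0u0 v0(1) bx t]
    let ?u = "sin t *\<^sub>R u0 + cos t *\<^sub>R v0"
    let ?w = "sin t *\<^sub>R w0 + cos t *\<^sub>R ph"
    have phW: "ph \<in> W" "b ph ph = -1" using phi_Sq[OF v0(1)] Sq_iff by (auto simp: ph_def)
    have pw: "b ph w0 = 0" using perp[OF v0] by (simp add: ph_def)
    have wS: "?w \<in> Sq b e0 V"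
    proof -
      have "?w \<in> W" using phW w0W Wadd Wscale by blast
      moreover have "b ?w ?w = - ((sin t)\<^sup>2 + (cos t)\<^sup>2)"
        using w0w0 phW(2) pw by (simp add: bsimps bsym[of w0 ph] power2_eq_square algebra_simps)
      ultimately show ?thesis using Sq_iff by simp
    qed
    define s where "s = sin t / (cos t * a0) / c"
    have X: "Psi b e0 v0 ph + s *\<^sub>R v \<in> MM"
      using line_inv[OF v(3) v(2) M_pt[OF v0(1)]] by (simp add: ph_def)
    have "Psi b e0 ?u ?w = (1 / (cos t * a0)) *\<^sub>R (sin t *\<^sub>R u0 + cos t *\<^sub>R x0 + ?w)"
      using Psi_eq[OF PS(1)] PS(2,3) by (simp add: a0_def x0_def)
    also have "\<dots> = (sin t / (cos t * a0)) *\<^sub>R u0 + (1 / a0) *\<^sub>R x0 + (sin t / (cos t * a0)) *\<^sub>R w0 + (1 / a0) *\<^sub>R ph"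
      using ct a0 by (simp add: scaleR_add_right algebra_simps)
    also have "\<dots> = Psi b e0 v0 ph + s *\<^sub>R v"
      using ct a0 c(1) Psi_eq[OF v0(1)] by (simp add: vc s_def a0_def[symmetric] x0_def[symmetric] scaleR_add_right algebra_simps)
    finally have "Psi b e0 ?u ?w \<in> MM" using X by simp
    hence "\<phi> (base (Psi b e0 ?u ?w)) = fib (Psi b e0 ?u ?w)" using memM by blast
    thus ?thesis using base_Psi[OF PS(1) wS] by (simp add: ph_def)
  qed
  show ?thesis using that u0E w0S perp main by blast
qed

lemma line_split_form:
  assumes "contains_lightlike_geodesic b MM"
  shows "split_form_in b e0 U V MM"
proof -
  obtain P v where v: "v \<noteq> 0" "b v v = 0" "\<And>t. P + t *\<^sub>R v \<in> MM" using contains_iff_line assms by blast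
  obtain u0 w0 where S: "u0 \<in> equator b U" "w0 \<in> Sq b e0 V"
    "\<And>v0. v0 \<in> SP \<Longrightarrow> ipS b e0 u0 v0 = 0 \<Longrightarrow> b (\<phi> v0) w0 = 0"
    "\<And>t v0. - (pi/2) < t \<Longrightarrow> t < pi/2 \<Longrightarrow> v0 \<in> SP \<Longrightarrow> ipS b e0 u0 v0 = 0 \<Longrightarrow>
       \<phi> (sin t *\<^sub>R u0 + cos t *\<^sub>R v0) = sin t *\<^sub>R w0 + cos t *\<^sub>R \<phi> v0"
    using split_from_line[OF v] by blast
  let ?D = "{v \<in> SP. ipS b e0 u0 v = 0}"
  have im: "\<phi> ` ?D \<subseteq> {w \<in> Sq b e0 V. ipW b w0 w = 0}"
    using S(3) phi_Sq by (auto simp: ipW_def bsym[of w0])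
  have lip: "lip1 (ipS b e0) (ipW b) ?D \<phi>"
    using lip_iff[of \<phi> ?D] phi_Sq phi_lip Spp_Sp by auto
  show ?thesis unfolding split_form_in_def
    using gm im lip S(1,2,4) by blast
qed

lemma line_nonadm:
  assumes "contains_lightlike_geodesic b MM"
  shows "\<not> admissible (asym_boundary b e0 U \<phi>)"
proof -
  obtain P v where v: "v \<noteq> 0" "b v v = 0" "\<And>t. P + t *\<^sub>R v \<in> MM" using contains_iff_line assms by blast
  obtain u0 w0 where S: "u0 \<in> equator b U" "w0 \<in> Sq b e0 V"
    "\<And>t v0. - (pi/2) < t \<Longrightarrow> t < pi/2 \<Longrightarrow> v0 \<in> SP \<Longrightarrow> ipS b e0 u0 v0 = 0 \<Longrightarrow>
       \<phi> (sin t *\<^sub>R u0 + cos t *\<^sub>R v0) = sin t *\<^sub>R w0 + cos t *\<^sub>R \<phi> v0"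
    using split_from_line[OF v] by metis
  have uU: "u0 \<in> U" "b u0 u0 = 1" using S(1) eq_iff by auto
  have ww: "w0 \<in> W" "b w0 w0 = -1" using S(2) Sq_iff by auto
  have ie: "ipS b e0 u0 e0 = 0" using ipS_U[OF uU(1)] by (simp add: hx_e0' bsimps)
  have P1: "\<phi> (sin t *\<^sub>R u0 + cos t *\<^sub>R e0) = sin t *\<^sub>R w0 + cos t *\<^sub>R \<phi> e0"
    if "- (pi/2) < t" "t < pi/2" for t using S(3)[OF that e0_Spp ie] .
  have E1: "ext_map b e0 U \<phi> u0 = w0" by (rule ext_of_path[OF S(1) S(2) P1])
  have mE: "- u0 \<in> equator b U" using uU Uneg eq_iff by (simp add: bsimps)
  have mS: "- w0 \<in> Sq b e0 V" using ww Wneg Sq_iff by (simp add: bsimps)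
  have P2: "\<phi> (sin t *\<^sub>R (- u0) + cos t *\<^sub>R e0) = sin t *\<^sub>R (- w0) + cos t *\<^sub>R \<phi> e0"
    if "- (pi/2) < t" "t < pi/2" for t
  proof -
    have "- (pi/2) < - t" "- t < pi/2" using that by auto
    from P1[OF this] show ?thesis by simp
  qed
  have E2: "ext_map b e0 U \<phi> (- u0) = - w0" by (rule ext_of_path[OF mE mS P2])
  define x where "x = u0 + w0"
  have "b x u0 = 1" using oWU[OF uU(1) ww(1)] uU by (simp add: x_def bsimps)
  hence x0: "x \<noteq> 0" by (metis b_zeroL zero_neq_one)
  have r1: "ray x \<in> asym_boundary b e0 U \<phi>"
    unfolding asym_boundary_def using S(1) E1 by (auto simp: x_def)
  have r2: "ray (- x) \<in> asym_boundary b e0 U \<phi>"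
  proof -
    have "- x = - u0 + ext_map b e0 U \<phi> (- u0)" using E2 by (simp add: x_def)
    hence e: "ray (- x) = ray (- u0 + ext_map b e0 U \<phi> (- u0))" by simp
    show ?thesis unfolding asym_boundary_def
      by (rule CollectI, rule exI[of _ "- u0"]) (use e mE in simp)
  qed
  show ?thesis unfolding admissible_def using x0 r1 r2 by blast
qed

lemma split_line:
  assumes u0: "u0 \<in> equator b U" and w0: "w0 \<in> Sq b e0 V"
    and im: "\<psi> ` {v \<in> SP. ipS b e0 u0 v = 0} \<subseteq> {w \<in> Sq b e0 V. ipW b w0 w = 0}"
    and P: "\<forall>t v. - (pi/2) < t \<and> t < pi/2 \<and> v \<in> SP \<and> ipS b e0 u0 v = 0 \<longrightarrow>
               \<phi> (sin t *\<^sub>R u0 + cos t *\<^sub>R v) = sin t *\<^sub>R w0 + cos t *\<^sub>R \<psi> v"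
  shows "contains_lightlike_geodesic b MM"
proof -
  have uU: "u0 \<in> U" using u0 eq_iff by auto
  have ie: "ipS b e0 u0 e0 = 0" using ipS_U[OF uU] by (simp add: hx_e0' bsimps)
  have "\<psi> e0 \<in> Sq b e0 V" using im e0_Spp ie by blast
  hence zW: "\<psi> e0 \<in> W" using Sq_iff by blast
  show ?thesis
    by (rule line_from_path[OF u0 w0 zW]) (use P e0_Spp ie in blast)
qed

end



context chart begin

lemma b_pts_c: assumes "u \<in> Sp_plus b e0 U" "v \<in> Sp_plus b e0 U" "w \<in> W" "w' \<in> W"
  shows "b (Psi b e0 u w) (Psi b e0 v w') = (ipS b e0 u v - ipW b w w') / (ht u * ht v) - 1"
  using b_Psi[OF assms] Spp_D[OF assms(1)] Spp_D[OF assms(2)] by (simp add: ipS_eq ipW_eq field_simps)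

lemma pU_from_base: "pU P = (1 / ht (base P)) *\<^sub>R hx (base P)"
  using rr_pos[of P] by (simp add: ht_base hx_base)

lemma base_of: assumes u: "u \<in> Sp_plus b e0 U" and P: "pU P = (1 / ht u) *\<^sub>R hx u" shows "base P = u"
proof -
  note D = Spp_D[OF u]
  have "(rr P)\<^sup>2 = 1 + (1 / ht u) * ((1 / ht u) * (1 - (ht u)\<^sup>2))"
    using rr_sq[of P] P D by (simp add: bsimps)
  also have "\<dots> = (1 / ht u)\<^sup>2" using D(3) by (simp add: field_simps power2_eq_square)
  finally have "rr P = 1 / ht u" using rr_pos[of P] D(3)
    by (metis less_eq_real_def power2_eq_iff_nonneg zero_le_divide_1_iff)
  hence r: "1 / rr P = ht u" by simp
  show ?thesis unfolding base_def r P using D(3) x_split[of u] by (simp add: scaleR_add_right algebra_simps)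
qed

lemma pU_bound: "\<exists>L>0. \<forall>z. norm (pU z) \<le> L * norm z"
proof -
  have "bounded_linear pU" using pU_lin linear_conv_bounded_linear by blast
  then obtain L where "L > 0" "\<And>z. norm (pU z) \<le> norm z * L" using bounded_linear.pos_bounded by blast
  thus ?thesis by (metis mult.commute)
qed

lemma quad_bound: "\<exists>A>0. \<forall>P. b P P = -1 \<longrightarrow> (norm P)\<^sup>2 \<le> A * (norm (pU P))\<^sup>2 + A"
proof -
  obtain C where C: "C > 0" "\<And>x. (norm x)\<^sup>2 \<le> C * Bp x x" using norm_Bp by blast
  obtain K where K: "K > 0" "\<And>x. Bp x x \<le> K * (norm x)\<^sup>2" using Bp_norm by blast
  have "(norm P)\<^sup>2 \<le> (2 * C * K) * (norm (pU P))\<^sup>2 + C" if "b P P = -1" for P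
  proof -
    have "b (pW P) (pW P) = -1 - b (pU P) (pU P)" using b_split[of P P] that by simp
    hence "Bp P P = 2 * b (pU P) (pU P) + 1" by (simp add: Bp_def)
    also have "b (pU P) (pU P) = Bp (pU P) (pU P)" using Bp_U[OF pU_in pU_in] by simp
    finally have "Bp P P \<le> 2 * (K * (norm (pU P))\<^sup>2) + 1" using K(2)[of "pU P"] by simp
    hence "C * Bp P P \<le> C * (2 * (K * (norm (pU P))\<^sup>2) + 1)" using C(1) by (simp add: mult_left_mono)
    thus ?thesis using C(2)[of P] by (simp add: algebra_simps)
  qed
  note main = this
  have "(norm P)\<^sup>2 \<le> (2 * C * K + C) * (norm (pU P))\<^sup>2 + (2 * C * K + C)" if "b P P = -1" for P
  proof -
    have h: "(norm P)\<^sup>2 \<le> (2 * C * K) * (norm (pU P))\<^sup>2 + C" using main[OF that] .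
    have n1: "0 \<le> C * (norm (pU P))\<^sup>2" using C(1) by simp
    have n2: "0 \<le> 2 * C * K" using C(1) K(1) by simp
    have e: "(2 * C * K + C) * (norm (pU P))\<^sup>2 = (2 * C * K) * (norm (pU P))\<^sup>2 + C * (norm (pU P))\<^sup>2"
      by (simp add: distrib_right)
    show ?thesis using h n1 n2 e by linarith
  qed
  hence "\<forall>P. b P P = -1 \<longrightarrow> (norm P)\<^sup>2 \<le> (2 * C * K + C) * (norm (pU P))\<^sup>2 + (2 * C * K + C)" by blast
  moreover have "0 < 2 * C * K + C" by (rule add_pos_pos) (use C(1) K(1) in simp_all)
  ultimately show ?thesis by (intro exI[of _ "2 * C * K + C"]) auto
qed

lemma rr_cont: "continuous_on S rr"
  unfolding rr_def by (intro continuous_intros b_cont pU_cont)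

lemma base_cont: "continuous_on S base"
  unfolding base_def
  by (intro continuous_intros rr_cont pU_cont) (metis rr_pos less_irrefl)

end

context graph begin

definition FF where "FF x = pU x + rr x *\<^sub>R \<phi> (base x)"

lemma FF_Psi: "FF x = Psi b e0 (base x) (\<phi> (base x))"
  using Psi_eq[OF base_Spp, of x] rr_pos[of x] by (simp add: FF_def ht_base hx_base scaleR_add_right)

lemma FF_M: "FF x \<in> MM" using FF_Psi M_pt base_Spp by simp

lemma pU_FF: "pU (FF x) = pU x"
  using phi_W[OF base_Spp] by (simp add: FF_def linear_add[OF pU_lin] linear_scale[OF pU_lin] pU_U[OF pU_in] pU_Wz)

lemma FF_cont: "continuous_on S FF"
proof -
  have "continuous_on S (\<phi> \<circ> base)"
    by (rule continuous_on_compose[OF base_cont continuous_on_subset[OF phi_cont]]) (use base_Spp in auto)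
  thus ?thesis unfolding FF_def by (intro continuous_intros pU_cont rr_cont) (simp add: o_def)
qed

end

lemma chart_change:
  assumes G: "graph b p q e0 U V \<phi>" and C: "chart b p q e1 U1 V1"
  shows "\<exists>\<phi>1. graph_map b e1 U1 V1 \<phi>1 \<and> graph_of b e1 U1 \<phi>1 = graph_of b e0 U \<phi>"
proof -
  interpret G: graph b p q e0 U V \<phi> by (rule G)
  interpret C: chart b p q e1 U1 V1 by (rule C)
  let ?M = "graph_of b e0 U \<phi>"
  have injC: "P = Q" if "P \<in> ?M" "Q \<in> ?M" "C.pU P = C.pU Q" for P Q
  proof (rule ccontr)
    assume ne: "P \<noteq> Q"
    have "C.pU (P - Q) = 0" using that(3) by (simp add: linear_diff[OF C.pU_lin])
    hence dW: "P - Q \<in> C.W" using C.pU_W[of "P - Q"] by simp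
    have "b (P - Q) (P - Q) = -2 - 2 * b P Q"
      using G.M_quad that(1,2) by (simp add: G.bsimps G.bsym[of Q P])
    hence "b (P - Q) (P - Q) \<ge> 0" using G.M_achronal[OF that(1,2)] by simp
    thus False using C.W_neg[OF dW] ne by force
  qed
  define g where "g x = C.pU (G.FF x)" for x
  have gU: "g x \<in> U1" for x using C.pU_in by (simp add: g_def)
  have gcont: "continuous_on U g"
    unfolding g_def using continuous_on_compose[OF G.FF_cont C.pU_cont] by (simp add: o_def)
  have ginj: "inj_on g U"
  proof (rule inj_onI)
    fix x y assume xy: "x \<in> U" "y \<in> U" "g x = g y"
    hence "G.FF x = G.FF y" using injC G.FF_M by (simp add: g_def)
    hence "G.pU (G.FF x) = G.pU (G.FF y)" by simp
    thus "x = y" by (simp add: G.pU_FF G.pU_U[OF xy(1)] G.pU_U[OF xy(2)])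
  qed
  have gfun: "g \<in> U \<rightarrow> U1" using gU by auto
  have dle: "dim U1 \<le> dim U" using G.dimU C.dimU by simp
  have op: "openin (top_of_set U1) (g ` U)"
    by (rule invariance_of_domain_subspaces[OF openin_subtopology_self G.subU C.subU dle gcont gfun ginj])
  have cl: "closed (g ` U)"
    unfolding closed_sequential_limits
  proof (intro allI impI)
    fix y l assume a: "(\<forall>n. y n \<in> g ` U) \<and> y \<longlonglongrightarrow> l"
    have yn: "y n \<in> g ` U" for n using a by blast
    have "\<exists>x. x \<in> U \<and> g x = y n" for n using yn[of n] by (rule imageE) auto
    hence "\<forall>n. \<exists>x. x \<in> U \<and> g x = y n" by blast
    from choice[OF this] obtain x where x0: "\<forall>n. x n \<in> U \<and> g (x n) = y n" by blast
    have x: "\<And>n. x n \<in> U" "\<And>n. g (x n) = y n" using x0 by auto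
    have "bounded (range y)" using convergent_imp_bounded a by blast
    then obtain B where B0: "B > 0" "\<And>z. z \<in> range y \<Longrightarrow> norm z \<le> B" unfolding bounded_pos by blast
    have B: "B > 0" "\<And>n. norm (y n) \<le> B" using B0 by auto
    obtain L where L: "L > 0" "\<And>z. norm (G.pU z) \<le> L * norm z" using G.pU_bound by blast
    obtain A where A: "A > 0" "\<And>P. b P P = -1 \<Longrightarrow> (norm P)\<^sup>2 \<le> A * (norm (C.pU P))\<^sup>2 + A"
      using C.quad_bound by blast
    define R where "R = sqrt (L\<^sup>2 * (A * B\<^sup>2 + A))"
    have xR: "x n \<in> cball 0 R \<inter> U" for n
    proof -
      have "norm (x n) = norm (G.pU (G.FF (x n)))" by (simp add: G.pU_FF G.pU_U[OF x(1)])
      also have "\<dots> \<le> L * norm (G.FF (x n))" by (rule L(2))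
      finally have n1: "norm (x n) \<le> L * norm (G.FF (x n))" .
      have "(norm (G.FF (x n)))\<^sup>2 \<le> A * (norm (y n))\<^sup>2 + A"
        using A(2)[OF G.M_quad[OF G.FF_M[of "x n"]]] x(2)[of n] by (simp add: g_def)
      also have "\<dots> \<le> A * B\<^sup>2 + A" using B(2)[of n] A(1) by (simp add: mult_left_mono power_mono)
      finally have n2: "(norm (G.FF (x n)))\<^sup>2 \<le> A * B\<^sup>2 + A" .
      have "(norm (x n))\<^sup>2 \<le> (L * norm (G.FF (x n)))\<^sup>2" using n1 by (simp add: power_mono)
      also have "\<dots> = L\<^sup>2 * (norm (G.FF (x n)))\<^sup>2" by (simp add: power_mult_distrib)
      also have "\<dots> \<le> L\<^sup>2 * (A * B\<^sup>2 + A)" using n2 by (simp add: mult_left_mono)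
      finally have "norm (x n) \<le> R" unfolding R_def by (rule real_le_rsqrt)
      thus ?thesis using x(1) by simp
    qed
    have "compact (cball 0 R \<inter> U)" using G.subU closed_subspace by (intro compact_Int_closed) auto
    hence "seq_compact (cball 0 R \<inter> U)" by (rule compact_imp_seq_compact)
    note sc = this
    have xR': "\<forall>n. x n \<in> cball 0 R \<inter> U" using xR by blast
    obtain l' r where lr: "l' \<in> cball 0 R \<inter> U" "strict_mono r" "(x \<circ> r) \<longlonglongrightarrow> l'"
      by (rule seq_compactE[OF sc xR'])
    from gcont have H: "\<forall>xs. \<forall>a\<in>U. (\<forall>n. xs n \<in> U) \<and> xs \<longlonglongrightarrow> a \<longrightarrow> (g \<circ> xs) \<longlonglongrightarrow> g a"
      unfolding continuous_on_sequentially .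
    have lU: "l' \<in> U" using lr(1) by blast
    have xrU: "\<forall>n. (x \<circ> r) n \<in> U" using x(1) by simp
    have "(g \<circ> (x \<circ> r)) \<longlonglongrightarrow> g l'" using H lU xrU lr(3) by blast
    moreover have "g \<circ> (x \<circ> r) = y \<circ> r" using x(2) by (auto simp: o_def)
    ultimately have "(y \<circ> r) \<longlonglongrightarrow> g l'" by simp
    moreover have "(y \<circ> r) \<longlonglongrightarrow> l" using LIMSEQ_subseq_LIMSEQ a lr(2) by blast
    ultimately have "l = g l'" using LIMSEQ_unique by blast
    thus "l \<in> g ` U" using lr(1) by blast
  qed
  have cl': "closedin (top_of_set U1) (g ` U)" using closed_subset[OF _ cl] gU by blast
  have "connected U1" using convex_connected subspace_imp_convex C.subU by blast
  hence "g ` U = {} \<or> g ` U = U1" using op cl' connected_clopen by blast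
  moreover have "g ` U \<noteq> {}" using G.U0 by blast
  ultimately have surj: "g ` U = U1" by blast
  have ex: "\<exists>P\<in>?M. C.base P = u" if u: "u \<in> Sp_plus b e1 U1" for u
  proof -
    have "(1 / C.ht u) *\<^sub>R C.hx u \<in> U1" using C.Spp_D[OF u] C.Uscale by blast
    hence "(1 / C.ht u) *\<^sub>R C.hx u \<in> g ` U" using surj by simp
    then obtain x where "x \<in> U" "g x = (1 / C.ht u) *\<^sub>R C.hx u" by (auto simp: image_iff)
    hence "C.base (G.FF x) = u" using C.base_of[OF u] by (simp add: g_def)
    thus ?thesis using G.FF_M by blast
  qed
  have uq: "P = Q" if "P \<in> ?M" "Q \<in> ?M" "C.base P = C.base Q" for P Q
    using injC[OF that(1,2)] C.pU_from_base[of P] C.pU_from_base[of Q] that(3) by simp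
  define sel where "sel u = (THE P. P \<in> ?M \<and> C.base P = u)" for u
  have sel: "sel u \<in> ?M \<and> C.base (sel u) = u" if "u \<in> Sp_plus b e1 U1" for u
    unfolding sel_def by (rule theI') (use ex[OF that] uq in blast)
  have sel_eq: "sel (C.base Q) = Q" if "Q \<in> ?M" for Q
    unfolding sel_def by (rule the1_equality) (use that uq in blast)+
  define \<phi>1 where "\<phi>1 u = C.fib (sel u)" for u
  have psi1: "Psi b e1 u (\<phi>1 u) = sel u" if "u \<in> Sp_plus b e1 U1" for u
    using C.Psi_base_fib[of "sel u"] sel[OF that] by (simp add: \<phi>1_def)
  have im: "\<phi>1 ` Sp_plus b e1 U1 \<subseteq> Sq b e1 V1"
    using C.fib_Sq G.M_quad sel by (auto simp: \<phi>1_def)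
  have lip: "lip1 (ipS b e1) (ipW b) (Sp_plus b e1 U1) \<phi>1"
  proof -
    have "ipS b e1 u v \<le> ipW b (\<phi>1 u) (\<phi>1 v)" if uv: "u \<in> Sp_plus b e1 U1" "v \<in> Sp_plus b e1 U1" for u v
    proof -
      have w: "\<phi>1 u \<in> C.W" "\<phi>1 v \<in> C.W" using im uv C.Sq_iff by auto
      have "b (sel u) (sel v) \<le> -1" using G.M_achronal sel uv by blast
      hence "(ipS b e1 u v - ipW b (\<phi>1 u) (\<phi>1 v)) / (C.ht u * C.ht v) \<le> 0"
        using C.b_pts_c[OF uv w] psi1 uv by simp
      moreover have "C.ht u * C.ht v > 0" using C.Spp_D uv by simp
      ultimately show ?thesis by (simp add: divide_le_0_iff)
    qed
    thus ?thesis using C.lip_iff[OF im] C.Spp_Sp by auto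
  qed
  have gr: "graph_of b e1 U1 \<phi>1 = ?M"
  proof
    show "graph_of b e1 U1 \<phi>1 \<subseteq> ?M" using psi1 sel by (auto simp: graph_of_def)
    show "?M \<subseteq> graph_of b e1 U1 \<phi>1"
    proof
      fix Q assume Q: "Q \<in> ?M"
      have "Q = Psi b e1 (C.base Q) (\<phi>1 (C.base Q))" using psi1[OF C.base_Spp] sel_eq[OF Q] by simp
      thus "Q \<in> graph_of b e1 U1 \<phi>1" using C.base_Spp by (auto simp: graph_of_def)
    qed
  qed
  show ?thesis using im lip gr by (intro exI[of _ \<phi>1]) (simp add: graph_map_def)
qed


theorem mainTheorem13:
  fixes b :: "'a::euclidean_space \<Rightarrow> 'a \<Rightarrow> real" and p q :: nat
    and e0 :: 'a and U V M :: "'a set" and \<phi> :: "'a \<Rightarrow> 'a"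
  assumes "DIM('a) = p + q + 1"
    and "symmetric_bilinear b"
    and "has_signature b p (q + 1)"
    and "entire_graph_in b p e0 U V \<phi> M"
  shows "(\<not> admissible (asym_boundary b e0 U \<phi>) \<longleftrightarrow> contains_lightlike_geodesic b M)
       \<and> (contains_lightlike_geodesic b M \<longleftrightarrow> foliated_by_lightlike_geodesics b M)
       \<and> (foliated_by_lightlike_geodesics b M \<longleftrightarrow>
            (\<forall>e0' U' V'. fermi_chart b p e0' U' V' \<longrightarrow> split_form_in b e0' U' V' M))"
proof -
  have fc: "fermi_chart b p e0 U V" and gm: "graph_map b e0 U V \<phi>" and MM: "M = graph_of b e0 U \<phi>"
    using assms(4) by (auto simp: entire_graph_in_def)
  have Gl: "graph b p q e0 U V \<phi>"
    unfolding graph_def graph_axioms_def chart_def chart_axioms_def bform_def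
    using assms(1,2,3) fc gm by blast
  interpret G: graph b p q e0 U V \<phi> by (rule Gl)
  have A: "\<not> admissible (asym_boundary b e0 U \<phi>) \<longleftrightarrow> contains_lightlike_geodesic b M"
    using G.nonadm_geod G.line_nonadm MM by blast
  have B: "contains_lightlike_geodesic b M \<longleftrightarrow> foliated_by_lightlike_geodesics b M"
    using G.contains_iff_foliated MM by simp
  have C1: "split_form_in b e0' U' V' M"
    if c: "contains_lightlike_geodesic b M" and f: "fermi_chart b p e0' U' V'" for e0' U' V'
  proof -
    have Cl: "chart b p q e0' U' V'"
      unfolding chart_def chart_axioms_def bform_def using assms(1,2,3) f by blast
    obtain \<phi>1 where \<phi>1: "graph_map b e0' U' V' \<phi>1" "graph_of b e0' U' \<phi>1 = graph_of b e0 U \<phi>"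
      using chart_change[OF Gl Cl] by blast
    have G1l: "graph b p q e0' U' V' \<phi>1"
      using Cl \<phi>1(1) unfolding graph_def graph_axioms_def by blast
    interpret G1: graph b p q e0' U' V' \<phi>1 by (rule G1l)
    have "contains_lightlike_geodesic b (graph_of b e0' U' \<phi>1)" using c \<phi>1(2) MM by simp
    hence "split_form_in b e0' U' V' (graph_of b e0' U' \<phi>1)" by (rule G1.line_split_form)
    thus ?thesis using \<phi>1(2) MM by simp
  qed
  have C2: "contains_lightlike_geodesic b M" if s: "split_form_in b e0 U V M"
  proof -
    obtain \<phi>' u0 w0 \<psi> where d: "graph_map b e0 U V \<phi>'" "M = graph_of b e0 U \<phi>'"
      "u0 \<in> equator b U" "w0 \<in> Sq b e0 V"
      "\<psi> ` {v \<in> Sp_plus b e0 U. ipS b e0 u0 v = 0} \<subseteq> {w \<in> Sq b e0 V. ipW b w0 w = 0}"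
      "\<forall>t v. - (pi/2) < t \<and> t < pi/2 \<and> v \<in> Sp_plus b e0 U \<and> ipS b e0 u0 v = 0 \<longrightarrow>
               \<phi>' (sin t *\<^sub>R u0 + cos t *\<^sub>R v) = sin t *\<^sub>R w0 + cos t *\<^sub>R \<psi> v"
      using s unfolding split_form_in_def by blast
    have G2l: "graph b p q e0 U V \<phi>'"
      using G.chart_axioms d(1) unfolding graph_def graph_axioms_def by blast
    interpret G2: graph b p q e0 U V \<phi>' by (rule G2l)
    have "contains_lightlike_geodesic b (graph_of b e0 U \<phi>')" by (rule G2.split_line[OF d(3,4,5,6)])
    thus ?thesis using d(2) by simp
  qed
  have C: "foliated_by_lightlike_geodesics b M \<longleftrightarrow>
            (\<forall>e0' U' V'. fermi_chart b p e0' U' V' \<longrightarrow> split_form_in b e0' U' V' M)"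
    using B C1 C2 fc by blast
  show ?thesis using A B C by blast
qed

end
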